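(* For a two-player stage game $G$, we have $G\notin\mathcal{G}_{LS}^{p,p}$ and $G\in\mathcal{G}_{LS}^{m,p}$ if and only if one of the following holds: (1) $|V_1^{p,p}|=0$, $|V_2^{p,p}|=0$, and condition $\mathcal{C}^{m,p}(G)$ holds; (2) $|V_1^{p,p}|=1$, $|V_2^{p,p}|=1$, and $\mathcal{C}^{m,p}(G)$ holds; (3) $|V_1^{p,p}|>1$, $|V_2^{p,p}|=1$, there do not exist $\hat a_1,a_1'\in A_1$, $\hat a_2\in A_2$ with $u_1(\hat a_1,\hat a_2)<u_1(a_1',\hat a_2)$ and $\hat a_2$ a best response to $\hat a_1$, and $\mathcal{C}^{m,p}(G)$ holds.
   Context: A two-player stage game $G$ has finite nonempty action sets $A_1,A_2$ and payoffs $u_1,u_2:A_1\times A_2\to\mathbb{R}$, extended to mixed strategies by expectation; $S_{\sigma_1}$ is the support of $\sigma_1$; best response means maximizing expected payoff against the opponent's strategy. $G(T)$ is the $T$-round repetition with realized actions observed each round and payoffs the expected sum of stage payoffs; an SPE of $G(T)$ is a strategy profile whose continuation after every history of length $k<T$ is a Nash equilibrium of $G(T-k)$. Regimes: pure-pure ($p,p$): both players restricted to actions (in the stage game and in every round, including deviations); mixed-pure ($m,p$): player 1 may mix, player 2 uses only actions; mixed-mixed ($m,m$): both may mix. For regime $r$, $\mathrm{Nash}^r(G)$ is the set of stage-game profiles available in $r$ from which no player can profitably deviate unilaterally to a strategy available in $r$, and $V_i^r=\{u_i(\sigma):\sigma\in\mathrm{Nash}^r(G)\}$. Locally suboptimal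 behavior occurs in an SPE $\mu$ of $G(T)$ (regime $r$) if for some history $h$ of length $k<T$, $(\mu_1(h),\mu_2(h))\notin\mathrm{Nash}^r(G)$. $\mathcal{G}_{LS}^r$ is the set of stage games $G$ for which there exist $T\ge1$ and an SPE of $G(T)$ in regime $r$ in which locally suboptimal behavior occurs. Condition $\mathcal{C}^{m,p}(G)$ holds iff one of: (i) $|V_1^{m,p}|>1$, $|V_2^{m,p}|>1$, and some $(\hat\sigma_1,\hat a_2)\in\Delta A_1\times A_2$ is not in $\mathrm{Nash}^{m,p}(G)$; (ii) $|V_1^{m,p}|>1$, $|V_2^{m,p}|=1$, and there exist $\hat\sigma_1\in\Delta A_1$, $a_1'\in A_1$, $\hat a_2\in A_2$ with $u_1(\hat\sigma_1,\hat a_2)<u_1(a_1',\hat a_2)$, $\hat a_2$ a best response to $\hat\sigma_1$, and, if $|S_{\hat\sigma_1}|>1$, with $D=\{u_1(\sigma)-u_1(\sigma'):\sigma,\sigma'\in\mathrm{Nash}^{m,p}(G)\}$, some $a\in S_{\hat\sigma_1}$ such that for every $a'\in S_{\hat\sigma_1}\setminus\{a\}$ there are an integer $n\ge0$ and $d_1,\dots,d_n\in D$ with $u_1(a,\hat a_2)-u_1(a',\hat a_2)=\sum_{k=1}^n d_k$; (iii) $|V_1^{m,p}|=1$, $|V_2^{m,p}|>1$, and there exist $\hat\sigma_1\in\Delta A_1$, $\hat a_2,a_2'\in A_2$ with $u_2(\hat\sigma_1,\hat a_2)<u_2(\hat\sigma_1,a_2')$ and $\hat\sigma_1$ a best response to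 $\hat a_2$. *)

theory Defs
  imports Complex_Main
begin

datatype regime = PP | MP | MM

definition mixed :: "'c set \<Rightarrow> ('c \<Rightarrow> real) \<Rightarrow> bool" where
  "mixed A \<sigma> \<longleftrightarrow> (\<forall>x. 0 \<le> \<sigma> x) \<and> (\<forall>x. x \<notin> A \<longrightarrow> \<sigma> x = 0) \<and> sum \<sigma> A = 1"

definition pt :: "'c \<Rightarrow> 'c \<Rightarrow> real" where
  "pt a = (\<lambda>x. if x = a then 1 else 0)"

definition pure :: "'c set \<Rightarrow> ('c \<Rightarrow> real) \<Rightarrow> bool" where
  "pure A \<sigma> \<longleftrightarrow> (\<exists>a\<in>A. \<sigma> = pt a)"

definition support :: "('c \<Rightarrow> real) \<Rightarrow> 'c set" where
  "support \<sigma> = {a. 0 < \<sigma> a}"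

definition avail1 :: "regime \<Rightarrow> 'a set \<Rightarrow> ('a \<Rightarrow> real) \<Rightarrow> bool" where
  "avail1 r A \<sigma> = (if r = PP then pure A \<sigma> else mixed A \<sigma>)"

definition avail2 :: "regime \<Rightarrow> 'b set \<Rightarrow> ('b \<Rightarrow> real) \<Rightarrow> bool" where
  "avail2 r A \<sigma> = (if r = MM then mixed A \<sigma> else pure A \<sigma>)"

definition EU :: "'a set \<Rightarrow> 'b set \<Rightarrow> ('a \<Rightarrow> 'b \<Rightarrow> real) \<Rightarrow> ('a \<Rightarrow> real) \<Rightarrow> ('b \<Rightarrow> real) \<Rightarrow> real" where
  "EU A1 A2 u \<sigma>1 \<sigma>2 = (\<Sum>a1\<in>A1. \<Sum>a2\<in>A2. \<sigma>1 a1 * \<sigma>2 a2 * u a1 a2)"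

definition nash :: "regime \<Rightarrow> 'a set \<Rightarrow> 'b set \<Rightarrow> ('a \<Rightarrow> 'b \<Rightarrow> real) \<Rightarrow> ('a \<Rightarrow> 'b \<Rightarrow> real)
    \<Rightarrow> ('a \<Rightarrow> real) \<Rightarrow> ('b \<Rightarrow> real) \<Rightarrow> bool" where
  "nash r A1 A2 u1 u2 \<sigma>1 \<sigma>2 \<longleftrightarrow>
     avail1 r A1 \<sigma>1 \<and> avail2 r A2 \<sigma>2 \<and>
     (\<forall>\<tau>. avail1 r A1 \<tau> \<longrightarrow> EU A1 A2 u1 \<tau> \<sigma>2 \<le> EU A1 A2 u1 \<sigma>1 \<sigma>2) \<and>
     (\<forall>\<tau>. avail2 r A2 \<tau> \<longrightarrow> EU A1 A2 u2 \<sigma>1 \<tau> \<le> EU A1 A2 u2 \<sigma>1 \<sigma>2)"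

definition NashSet :: "regime \<Rightarrow> 'a set \<Rightarrow> 'b set \<Rightarrow> ('a \<Rightarrow> 'b \<Rightarrow> real) \<Rightarrow> ('a \<Rightarrow> 'b \<Rightarrow> real)
    \<Rightarrow> (('a \<Rightarrow> real) \<times> ('b \<Rightarrow> real)) set" where
  "NashSet r A1 A2 u1 u2 = {(\<sigma>1, \<sigma>2). nash r A1 A2 u1 u2 \<sigma>1 \<sigma>2}"

definition V1 :: "regime \<Rightarrow> 'a set \<Rightarrow> 'b set \<Rightarrow> ('a \<Rightarrow> 'b \<Rightarrow> real) \<Rightarrow> ('a \<Rightarrow> 'b \<Rightarrow> real) \<Rightarrow> real set" where
  "V1 r A1 A2 u1 u2 = (\<lambda>(\<sigma>1, \<sigma>2). EU A1 A2 u1 \<sigma>1 \<sigma>2) ` NashSet r A1 A2 u1 u2"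

definition V2 :: "regime \<Rightarrow> 'a set \<Rightarrow> 'b set \<Rightarrow> ('a \<Rightarrow> 'b \<Rightarrow> real) \<Rightarrow> ('a \<Rightarrow> 'b \<Rightarrow> real) \<Rightarrow> real set" where
  "V2 r A1 A2 u1 u2 = (\<lambda>(\<sigma>1, \<sigma>2). EU A1 A2 u2 \<sigma>1 \<sigma>2) ` NashSet r A1 A2 u1 u2"

(* |V| > 1 (V may a priori be infinite) *)
definition more_than_one :: "'c set \<Rightarrow> bool" where
  "more_than_one V \<longleftrightarrow> infinite V \<or> 1 < card V"

(* Repeated game: histories are lists of realized action profiles; a strategy maps
   histories to stage strategies. rep_payoff ... h n is player's expected sum of
   stage payoffs over n rounds, starting after history h. *)
primrec rep_payoff :: "'a set \<Rightarrow> 'b set \<Rightarrow> ('a \<Rightarrow> 'b \<Rightarrow> real)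
    \<Rightarrow> (('a \<times> 'b) list \<Rightarrow> 'a \<Rightarrow> real) \<Rightarrow> (('a \<times> 'b) list \<Rightarrow> 'b \<Rightarrow> real)
    \<Rightarrow> ('a \<times> 'b) list \<Rightarrow> nat \<Rightarrow> real" where
  "rep_payoff A1 A2 u \<mu>1 \<mu>2 h 0 = 0"
| "rep_payoff A1 A2 u \<mu>1 \<mu>2 h (Suc n) =
     (\<Sum>a1\<in>A1. \<Sum>a2\<in>A2. \<mu>1 h a1 * \<mu>2 h a2 *
        (u a1 a2 + rep_payoff A1 A2 u \<mu>1 \<mu>2 (h @ [(a1, a2)]) n))"

definition strat1 :: "regime \<Rightarrow> 'a set \<Rightarrow> (('a \<times> 'b) list \<Rightarrow> 'a \<Rightarrow> real) \<Rightarrow> bool" where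
  "strat1 r A1 \<mu> \<longleftrightarrow> (\<forall>h. avail1 r A1 (\<mu> h))"

definition strat2 :: "regime \<Rightarrow> 'b set \<Rightarrow> (('a \<times> 'b) list \<Rightarrow> 'b \<Rightarrow> real) \<Rightarrow> bool" where
  "strat2 r A2 \<mu> \<longleftrightarrow> (\<forall>h. avail2 r A2 (\<mu> h))"

definition nash_rep :: "regime \<Rightarrow> 'a set \<Rightarrow> 'b set \<Rightarrow> ('a \<Rightarrow> 'b \<Rightarrow> real) \<Rightarrow> ('a \<Rightarrow> 'b \<Rightarrow> real)
    \<Rightarrow> nat \<Rightarrow> (('a \<times> 'b) list \<Rightarrow> 'a \<Rightarrow> real) \<Rightarrow> (('a \<times> 'b) list \<Rightarrow> 'b \<Rightarrow> real) \<Rightarrow> bool" where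
  "nash_rep r A1 A2 u1 u2 n \<mu>1 \<mu>2 \<longleftrightarrow>
     strat1 r A1 \<mu>1 \<and> strat2 r A2 \<mu>2 \<and>
     (\<forall>\<tau>. strat1 r A1 \<tau> \<longrightarrow> rep_payoff A1 A2 u1 \<tau> \<mu>2 [] n \<le> rep_payoff A1 A2 u1 \<mu>1 \<mu>2 [] n) \<and>
     (\<forall>\<tau>. strat2 r A2 \<tau> \<longrightarrow> rep_payoff A1 A2 u2 \<mu>1 \<tau> [] n \<le> rep_payoff A1 A2 u2 \<mu>1 \<mu>2 [] n)"

definition SPE :: "regime \<Rightarrow> 'a set \<Rightarrow> 'b set \<Rightarrow> ('a \<Rightarrow> 'b \<Rightarrow> real) \<Rightarrow> ('a \<Rightarrow> 'b \<Rightarrow> real)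
    \<Rightarrow> nat \<Rightarrow> (('a \<times> 'b) list \<Rightarrow> 'a \<Rightarrow> real) \<Rightarrow> (('a \<times> 'b) list \<Rightarrow> 'b \<Rightarrow> real) \<Rightarrow> bool" where
  "SPE r A1 A2 u1 u2 T \<mu>1 \<mu>2 \<longleftrightarrow>
     strat1 r A1 \<mu>1 \<and> strat2 r A2 \<mu>2 \<and>
     (\<forall>h. set h \<subseteq> A1 \<times> A2 \<and> length h < T \<longrightarrow>
        nash_rep r A1 A2 u1 u2 (T - length h) (\<lambda>h'. \<mu>1 (h @ h')) (\<lambda>h'. \<mu>2 (h @ h')))"

definition G_LS :: "regime \<Rightarrow> 'a set \<Rightarrow> 'b set \<Rightarrow> ('a \<Rightarrow> 'b \<Rightarrow> real) \<Rightarrow> ('a \<Rightarrow> 'b \<Rightarrow> real) \<Rightarrow> bool" where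
  "G_LS r A1 A2 u1 u2 \<longleftrightarrow>
     (\<exists>T \<ge> 1. \<exists>\<mu>1 \<mu>2. SPE r A1 A2 u1 u2 T \<mu>1 \<mu>2 \<and>
        (\<exists>h. set h \<subseteq> A1 \<times> A2 \<and> length h < T \<and> \<not> nash r A1 A2 u1 u2 (\<mu>1 h) (\<mu>2 h)))"

definition C_mp :: "'a set \<Rightarrow> 'b set \<Rightarrow> ('a \<Rightarrow> 'b \<Rightarrow> real) \<Rightarrow> ('a \<Rightarrow> 'b \<Rightarrow> real) \<Rightarrow> bool" where
  "C_mp A1 A2 u1 u2 \<longleftrightarrow>
    (let N = NashSet MP A1 A2 u1 u2; W1 = V1 MP A1 A2 u1 u2; W2 = V2 MP A1 A2 u1 u2;
         D = {EU A1 A2 u1 s1 s2 - EU A1 A2 u1 t1 t2 | s1 s2 t1 t2. (s1, s2) \<in> N \<and> (t1, t2) \<in> N}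
     in
     (more_than_one W1 \<and> more_than_one W2 \<and>
        (\<exists>\<sigma>1 a2. mixed A1 \<sigma>1 \<and> a2 \<in> A2 \<and> (\<sigma>1, pt a2) \<notin> N))
   \<or> (more_than_one W1 \<and> card W2 = 1 \<and>
        (\<exists>\<sigma>1 a1' a2. mixed A1 \<sigma>1 \<and> a1' \<in> A1 \<and> a2 \<in> A2 \<and>
           EU A1 A2 u1 \<sigma>1 (pt a2) < u1 a1' a2 \<and>
           (\<forall>b\<in>A2. EU A1 A2 u2 \<sigma>1 (pt b) \<le> EU A1 A2 u2 \<sigma>1 (pt a2)) \<and>
           (1 < card (support \<sigma>1) \<longrightarrow>
              (\<exists>a\<in>support \<sigma>1. \<forall>a'\<in>support \<sigma>1 - {a}.
                 \<exists>ds. set ds \<subseteq> D \<and> u1 a a2 - u1 a' a2 = sum_list ds))))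
   \<or> (card W1 = 1 \<and> more_than_one W2 \<and>
        (\<exists>\<sigma>1 a2 a2'. mixed A1 \<sigma>1 \<and> a2 \<in> A2 \<and> a2' \<in> A2 \<and>
           EU A1 A2 u2 \<sigma>1 (pt a2) < EU A1 A2 u2 \<sigma>1 (pt a2') \<and>
           (\<forall>\<tau>. mixed A1 \<tau> \<longrightarrow> EU A1 A2 u1 \<tau> (pt a2) \<le> EU A1 A2 u1 \<sigma>1 (pt a2)))))"

end

theory Submission
  imports Defs
begin

lemma pt_nonneg: "0 \<le> pt a x" by (simp add: pt_def)

lemma avail1_nonneg: "avail1 r A \<sigma> \<Longrightarrow> 0 \<le> \<sigma> x"
  by (auto simp: avail1_def pure_def mixed_def pt_def split: if_splits)

lemma avail2_nonneg: "avail2 r A \<sigma> \<Longrightarrow> 0 \<le> \<sigma> x"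
  by (auto simp: avail2_def pure_def mixed_def pt_def split: if_splits)

lemma sum_pt: "finite A \<Longrightarrow> b \<in> A \<Longrightarrow> (\<Sum>x\<in>A. pt b x * F x) = (F b::real)"
proof -
  assume "finite A" "b \<in> A"
  have "(\<Sum>x\<in>A. pt b x * F x) = (\<Sum>x\<in>A. if x = b then F x else 0)"
    by (rule sum.cong) (auto simp: pt_def)
  then show ?thesis using \<open>finite A\<close> \<open>b \<in> A\<close> by (simp add: sum.delta)
qed

lemma sum_pt1: "finite A \<Longrightarrow> b \<in> A \<Longrightarrow> sum (pt b) A = 1"
  using sum_pt[of A b "\<lambda>_. 1"] by simp

lemma avail1_sum: "finite A \<Longrightarrow> avail1 r A \<sigma> \<Longrightarrow> sum \<sigma> A = 1"
  by (auto simp: avail1_def pure_def mixed_def sum_pt1 split: if_splits)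

lemma avail2_sum: "finite A \<Longrightarrow> avail2 r A \<sigma> \<Longrightarrow> sum \<sigma> A = 1"
  by (auto simp: avail2_def pure_def mixed_def sum_pt1 split: if_splits)

lemma avail1_out: "avail1 r A \<sigma> \<Longrightarrow> x \<notin> A \<Longrightarrow> \<sigma> x = 0"
  by (auto simp: avail1_def pure_def mixed_def pt_def split: if_splits)

lemma mixed_pt: "finite A \<Longrightarrow> a \<in> A \<Longrightarrow> mixed A (pt a)"
  by (auto simp: mixed_def sum_pt1 pt_nonneg) (auto simp add: pt_def)

lemma avail1_pt: "finite A \<Longrightarrow> a \<in> A \<Longrightarrow> r \<noteq> MM \<Longrightarrow> avail1 r A (pt a)"
  by (auto simp: avail1_def pure_def mixed_pt)

lemma avail2_pt: "b \<in> A \<Longrightarrow> r \<noteq> MM \<Longrightarrow> avail2 r A (pt b)"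
  by (auto simp: avail2_def pure_def)

lemma avail2_pure: "avail2 r A \<sigma> \<Longrightarrow> r \<noteq> MM \<Longrightarrow> \<exists>b\<in>A. \<sigma> = pt b"
  by (auto simp: avail2_def pure_def)

lemma avail1_PP: "avail1 PP A \<sigma> \<Longrightarrow> \<exists>a\<in>A. \<sigma> = pt a"
  by (auto simp: avail1_def pure_def)

lemma avail1_MP: "avail1 MP A \<sigma> = mixed A \<sigma>" by (simp add: avail1_def)
lemma avail2_MP: "avail2 MP A \<sigma> = pure A \<sigma>" by (simp add: avail2_def)

lemma EU_pt2: "finite A2 \<Longrightarrow> b \<in> A2 \<Longrightarrow> EU A1 A2 u \<sigma> (pt b) = (\<Sum>a\<in>A1. \<sigma> a * u a b)"
  unfolding EU_def
proof (rule sum.cong[OF refl])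
  fix a assume "finite A2" "b \<in> A2"
  then show "(\<Sum>a2\<in>A2. \<sigma> a * pt b a2 * u a a2) = \<sigma> a * u a b"
    using sum_pt[of A2 b "\<lambda>a2. \<sigma> a * u a a2"] by (simp add: ac_simps)
qed

lemma EU_pt12: "finite A1 \<Longrightarrow> finite A2 \<Longrightarrow> a \<in> A1 \<Longrightarrow> b \<in> A2 \<Longrightarrow> EU A1 A2 u (pt a) (pt b) = u a b"
  by (simp add: EU_pt2 sum_pt)

lemma sum2_pt: "finite A2 \<Longrightarrow> b \<in> A2 \<Longrightarrow>
  (\<Sum>a1\<in>A1. \<Sum>a2\<in>A2. \<sigma> a1 * pt b a2 * F a1 a2) = (\<Sum>a1\<in>A1. \<sigma> a1 * F a1 b)"
proof (rule sum.cong[OF refl])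
  fix a assume "finite A2" "b \<in> A2"
  then show "(\<Sum>a2\<in>A2. \<sigma> a * pt b a2 * F a a2) = \<sigma> a * F a b"
    using sum_pt[of A2 b "\<lambda>a2. \<sigma> a * F a a2"] by (simp add: ac_simps)
qed

lemma sum2_plus: "(\<Sum>a1\<in>A1. \<Sum>a2\<in>A2. p a1 * q a2 * (u a1 a2 + c)) = EU A1 A2 u p q + c * (sum p A1 * sum q A2)"
  by (simp add: EU_def distrib_left sum.distrib sum_distrib_left sum_distrib_right ac_simps sum.swap[of _ A2 A1])

lemma sum2_plus1: "sum p A1 = 1 \<Longrightarrow> sum q A2 = 1 \<Longrightarrow>
  (\<Sum>a1\<in>A1. \<Sum>a2\<in>A2. p a1 * q a2 * (u a1 a2 + c)) = EU A1 A2 u p q + c"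
  by (simp add: sum2_plus)

lemma avg_le: "finite A \<Longrightarrow> (\<And>x. x \<in> A \<Longrightarrow> 0 \<le> (\<sigma> x::real)) \<Longrightarrow> sum \<sigma> A = 1 \<Longrightarrow> (\<And>x. x \<in> A \<Longrightarrow> f x \<le> c)
   \<Longrightarrow> (\<Sum>x\<in>A. \<sigma> x * f x) \<le> c"
proof -
  assume a: "finite A" "\<And>x. x \<in> A \<Longrightarrow> 0 \<le> (\<sigma> x::real)" "sum \<sigma> A = 1" "\<And>x. x \<in> A \<Longrightarrow> f x \<le> c"
  have "(\<Sum>x\<in>A. \<sigma> x * f x) \<le> (\<Sum>x\<in>A. \<sigma> x * c)"
    by (rule sum_mono) (simp add: a mult_left_mono)
  also have "\<dots> = c" using a by (simp add: sum_distrib_right[symmetric])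
  finally show ?thesis .
qed

lemma avg_eq: assumes "finite A" "\<And>x. x \<in> A \<Longrightarrow> 0 \<le> (\<sigma> x::real)" "sum \<sigma> A = 1"
  "\<And>x. x \<in> A \<Longrightarrow> f x \<le> (\<Sum>y\<in>A. \<sigma> y * f y)" "x \<in> A" "0 < \<sigma> x"
  shows "f x = (\<Sum>y\<in>A. \<sigma> y * f y)"
proof -
  let ?c = "(\<Sum>y\<in>A. \<sigma> y * f y)"
  have "(\<Sum>y\<in>A. \<sigma> y * (?c - f y)) = ?c * sum \<sigma> A - ?c"
    by (simp add: right_diff_distrib sum_subtractf sum_distrib_right ac_simps)
  also have "\<dots> = 0" using assms by simp
  finally have z: "(\<Sum>y\<in>A. \<sigma> y * (?c - f y)) = 0" .
  have "\<forall>y\<in>A. \<sigma> y * (?c - f y) = 0"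
    using sum_nonneg_eq_0_iff[OF assms(1), of "\<lambda>y. \<sigma> y * (?c - f y)"] z assms(2,4) by simp
  then show ?thesis using assms(5,6) by auto
qed

lemma rep_shift: "rep_payoff A1 A2 u (\<lambda>g. \<mu>1 (h0 @ g)) (\<lambda>g. \<mu>2 (h0 @ g)) h k = rep_payoff A1 A2 u \<mu>1 \<mu>2 (h0 @ h) k"
  by (induction k arbitrary: h) simp_all

lemma rep_agree: "(\<And>g. \<tau>1 (h @ g) = \<tau>1' (h @ g)) \<Longrightarrow> (\<And>g. \<tau>2 (h @ g) = \<tau>2' (h @ g)) \<Longrightarrow>
  rep_payoff A1 A2 u \<tau>1 \<tau>2 h k = rep_payoff A1 A2 u \<tau>1' \<tau>2' h k"
proof (induction k arbitrary: h)
  case 0 then show ?case by simp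
next
  case (Suc k)
  have e1: "\<tau>1 h = \<tau>1' h" "\<tau>2 h = \<tau>2' h" using Suc.prems[of "[]"] by simp_all
  have "rep_payoff A1 A2 u \<tau>1 \<tau>2 (h @ [(a1, a2)]) k = rep_payoff A1 A2 u \<tau>1' \<tau>2' (h @ [(a1, a2)]) k" for a1 a2
    by (rule Suc.IH) (use Suc.prems in \<open>metis append_assoc\<close>)+
  then show ?case by (simp add: e1)
qed

lemma os1:
  assumes nn: "\<And>h a. 0 \<le> \<mu>2 h a"
    and cond: "\<And>g k \<sigma>. length g + Suc k = L \<Longrightarrow> avail1 r A1 \<sigma> \<Longrightarrow>
      (\<Sum>a1\<in>A1. \<Sum>a2\<in>A2. \<sigma> a1 * \<mu>2 g a2 * (u a1 a2 + rep_payoff A1 A2 u \<mu>1 \<mu>2 (g @ [(a1,a2)]) k))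
        \<le> rep_payoff A1 A2 u \<mu>1 \<mu>2 g (Suc k)"
    and st: "strat1 r A1 \<tau>"
  shows "length h + n = L \<Longrightarrow> rep_payoff A1 A2 u \<tau> \<mu>2 h n \<le> rep_payoff A1 A2 u \<mu>1 \<mu>2 h n"
proof (induction n arbitrary: h)
  case 0 then show ?case by simp
next
  case (Suc n)
  have IH: "rep_payoff A1 A2 u \<tau> \<mu>2 (h @ [(a1,a2)]) n \<le> rep_payoff A1 A2 u \<mu>1 \<mu>2 (h @ [(a1,a2)]) n" for a1 a2
    by (rule Suc.IH) (use Suc.prems in simp)
  have av: "avail1 r A1 (\<tau> h)" using st by (simp add: strat1_def)
  have "rep_payoff A1 A2 u \<tau> \<mu>2 h (Suc n) \<le>
     (\<Sum>a1\<in>A1. \<Sum>a2\<in>A2. \<tau> h a1 * \<mu>2 h a2 * (u a1 a2 + rep_payoff A1 A2 u \<mu>1 \<mu>2 (h @ [(a1,a2)]) n))"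
    unfolding rep_payoff.simps
    by (intro sum_mono mult_left_mono add_left_mono IH mult_nonneg_nonneg avail1_nonneg[OF av] nn)
  also have "\<dots> \<le> rep_payoff A1 A2 u \<mu>1 \<mu>2 h (Suc n)"
    by (rule cond[OF _ av]) (use Suc.prems in simp)
  finally show ?case .
qed

lemma os2:
  assumes nn: "\<And>h a. 0 \<le> \<mu>1 h a"
    and cond: "\<And>g k \<sigma>. length g + Suc k = L \<Longrightarrow> avail2 r A2 \<sigma> \<Longrightarrow>
      (\<Sum>a1\<in>A1. \<Sum>a2\<in>A2. \<mu>1 g a1 * \<sigma> a2 * (u a1 a2 + rep_payoff A1 A2 u \<mu>1 \<mu>2 (g @ [(a1,a2)]) k))
        \<le> rep_payoff A1 A2 u \<mu>1 \<mu>2 g (Suc k)"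
    and st: "strat2 r A2 \<tau>"
  shows "length h + n = L \<Longrightarrow> rep_payoff A1 A2 u \<mu>1 \<tau> h n \<le> rep_payoff A1 A2 u \<mu>1 \<mu>2 h n"
proof (induction n arbitrary: h)
  case 0 then show ?case by simp
next
  case (Suc n)
  have IH: "rep_payoff A1 A2 u \<mu>1 \<tau> (h @ [(a1,a2)]) n \<le> rep_payoff A1 A2 u \<mu>1 \<mu>2 (h @ [(a1,a2)]) n" for a1 a2
    by (rule Suc.IH) (use Suc.prems in simp)
  have av: "avail2 r A2 (\<tau> h)" using st by (simp add: strat2_def)
  have "rep_payoff A1 A2 u \<mu>1 \<tau> h (Suc n) \<le>
     (\<Sum>a1\<in>A1. \<Sum>a2\<in>A2. \<mu>1 h a1 * \<tau> h a2 * (u a1 a2 + rep_payoff A1 A2 u \<mu>1 \<mu>2 (h @ [(a1,a2)]) n))"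
    unfolding rep_payoff.simps
    by (intro sum_mono mult_left_mono add_left_mono IH mult_nonneg_nonneg avail2_nonneg[OF av] nn)
  also have "\<dots> \<le> rep_payoff A1 A2 u \<mu>1 \<mu>2 h (Suc n)"
    by (rule cond[OF _ av]) (use Suc.prems in simp)
  finally show ?case .
qed

lemma SPE_intro:
  assumes s1: "strat1 r A1 \<mu>1" and s2: "strat2 r A2 \<mu>2"
    and c1: "\<And>g k \<sigma>. length g + Suc k = T \<Longrightarrow> avail1 r A1 \<sigma> \<Longrightarrow>
      (\<Sum>a1\<in>A1. \<Sum>a2\<in>A2. \<sigma> a1 * \<mu>2 g a2 * (u1 a1 a2 + rep_payoff A1 A2 u1 \<mu>1 \<mu>2 (g @ [(a1,a2)]) k))
        \<le> rep_payoff A1 A2 u1 \<mu>1 \<mu>2 g (Suc k)"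
    and c2: "\<And>g k \<sigma>. length g + Suc k = T \<Longrightarrow> avail2 r A2 \<sigma> \<Longrightarrow>
      (\<Sum>a1\<in>A1. \<Sum>a2\<in>A2. \<mu>1 g a1 * \<sigma> a2 * (u2 a1 a2 + rep_payoff A1 A2 u2 \<mu>1 \<mu>2 (g @ [(a1,a2)]) k))
        \<le> rep_payoff A1 A2 u2 \<mu>1 \<mu>2 g (Suc k)"
  shows "SPE r A1 A2 u1 u2 T \<mu>1 \<mu>2"
  unfolding SPE_def
proof (intro conjI s1 s2 allI impI)
  fix h :: "('a \<times> 'b) list" assume "set h \<subseteq> A1 \<times> A2 \<and> length h < T"
  then have lt: "length h < T" by simp
  let ?m1 = "\<lambda>g. \<mu>1 (h @ g)" and ?m2 = "\<lambda>g. \<mu>2 (h @ g)"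
  show "nash_rep r A1 A2 u1 u2 (T - length h) ?m1 ?m2"
    unfolding nash_rep_def
  proof (intro conjI allI impI)
    show "strat1 r A1 ?m1" using s1 by (simp add: strat1_def)
    show "strat2 r A2 ?m2" using s2 by (simp add: strat2_def)
    fix \<tau> :: "('a \<times> 'b) list \<Rightarrow> 'a \<Rightarrow> real" assume st: "strat1 r A1 \<tau>"
    show "rep_payoff A1 A2 u1 \<tau> ?m2 [] (T - length h) \<le> rep_payoff A1 A2 u1 ?m1 ?m2 [] (T - length h)"
    proof (rule os1[where L = "T - length h", OF _ _ st])
      show "0 \<le> \<mu>2 (h @ g) a" for g a using s2 by (meson strat2_def avail2_nonneg)
      fix g :: "('a \<times> 'b) list" and k \<sigma> assume "length g + Suc k = T - length h" "avail1 r A1 \<sigma>"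
      then show "(\<Sum>a1\<in>A1. \<Sum>a2\<in>A2. \<sigma> a1 * ?m2 g a2 * (u1 a1 a2 + rep_payoff A1 A2 u1 ?m1 ?m2 (g @ [(a1,a2)]) k))
        \<le> rep_payoff A1 A2 u1 ?m1 ?m2 g (Suc k)"
        using c1[of "h @ g" k \<sigma>] lt by (simp add: rep_shift)
    qed simp
  next
    fix \<tau> :: "('a \<times> 'b) list \<Rightarrow> 'b \<Rightarrow> real" assume st: "strat2 r A2 \<tau>"
    show "rep_payoff A1 A2 u2 ?m1 \<tau> [] (T - length h) \<le> rep_payoff A1 A2 u2 ?m1 ?m2 [] (T - length h)"
    proof (rule os2[where L = "T - length h", OF _ _ st])
      show "0 \<le> \<mu>1 (h @ g) a" for g a using s1 by (meson strat1_def avail1_nonneg)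
      fix g :: "('a \<times> 'b) list" and k \<sigma> assume "length g + Suc k = T - length h" "avail2 r A2 \<sigma>"
      then show "(\<Sum>a1\<in>A1. \<Sum>a2\<in>A2. ?m1 g a1 * \<sigma> a2 * (u2 a1 a2 + rep_payoff A1 A2 u2 ?m1 ?m2 (g @ [(a1,a2)]) k))
        \<le> rep_payoff A1 A2 u2 ?m1 ?m2 g (Suc k)"
        using c2[of "h @ g" k \<sigma>] lt by (simp add: rep_shift)
    qed simp
  qed
qed

lemma rd1:
  assumes nr: "nash_rep r A1 A2 u1 u2 (Suc k) (\<lambda>g. \<mu>1 (h @ g)) (\<lambda>g. \<mu>2 (h @ g))"
    and av: "avail1 r A1 \<sigma>" and s1: "strat1 r A1 \<mu>1"
  shows "(\<Sum>a1\<in>A1. \<Sum>a2\<in>A2. \<sigma> a1 * \<mu>2 h a2 * (u1 a1 a2 + rep_payoff A1 A2 u1 \<mu>1 \<mu>2 (h @ [(a1,a2)]) k))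
        \<le> rep_payoff A1 A2 u1 \<mu>1 \<mu>2 h (Suc k)"
proof -
  define \<tau> where "\<tau> = (\<lambda>g. if g = [] then \<sigma> else \<mu>1 (h @ g))"
  have st: "strat1 r A1 \<tau>" using s1 av by (simp add: strat1_def \<tau>_def)
  have le: "rep_payoff A1 A2 u1 \<tau> (\<lambda>g. \<mu>2 (h @ g)) [] (Suc k) \<le> rep_payoff A1 A2 u1 (\<lambda>g. \<mu>1 (h @ g)) (\<lambda>g. \<mu>2 (h @ g)) [] (Suc k)"
    using nr st by (simp add: nash_rep_def)
  have ag: "rep_payoff A1 A2 u1 \<tau> (\<lambda>g. \<mu>2 (h @ g)) [x] k = rep_payoff A1 A2 u1 (\<lambda>g. \<mu>1 (h @ g)) (\<lambda>g. \<mu>2 (h @ g)) [x] k" for x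
    by (rule rep_agree) (simp_all add: \<tau>_def)
  have t0: "\<tau> [] = \<sigma>" by (simp add: \<tau>_def)
  show ?thesis using le by (simp add: ag rep_shift t0)
qed

lemma rd2:
  assumes nr: "nash_rep r A1 A2 u1 u2 (Suc k) (\<lambda>g. \<mu>1 (h @ g)) (\<lambda>g. \<mu>2 (h @ g))"
    and av: "avail2 r A2 \<sigma>" and s2: "strat2 r A2 \<mu>2"
  shows "(\<Sum>a1\<in>A1. \<Sum>a2\<in>A2. \<mu>1 h a1 * \<sigma> a2 * (u2 a1 a2 + rep_payoff A1 A2 u2 \<mu>1 \<mu>2 (h @ [(a1,a2)]) k))
        \<le> rep_payoff A1 A2 u2 \<mu>1 \<mu>2 h (Suc k)"
proof -
  define \<tau> where "\<tau> = (\<lambda>g. if g = [] then \<sigma> else \<mu>2 (h @ g))"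
  have st: "strat2 r A2 \<tau>" using s2 av by (simp add: strat2_def \<tau>_def)
  have le: "rep_payoff A1 A2 u2 (\<lambda>g. \<mu>1 (h @ g)) \<tau> [] (Suc k) \<le> rep_payoff A1 A2 u2 (\<lambda>g. \<mu>1 (h @ g)) (\<lambda>g. \<mu>2 (h @ g)) [] (Suc k)"
    using nr st by (simp add: nash_rep_def)
  have ag: "rep_payoff A1 A2 u2 (\<lambda>g. \<mu>1 (h @ g)) \<tau> [x] k = rep_payoff A1 A2 u2 (\<lambda>g. \<mu>1 (h @ g)) (\<lambda>g. \<mu>2 (h @ g)) [x] k" for x
    by (rule rep_agree) (simp_all add: \<tau>_def)
  have t0: "\<tau> [] = \<sigma>" by (simp add: \<tau>_def)
  show ?thesis using le by (simp add: ag rep_shift t0)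
qed

lemma nash_avail1: "nash r A1 A2 u1 u2 p q \<Longrightarrow> avail1 r A1 p" by (simp add: nash_def)
lemma nash_avail2: "nash r A1 A2 u1 u2 p q \<Longrightarrow> avail2 r A2 q" by (simp add: nash_def)

lemma gen_SPE:
  fixes f :: "('a \<times> 'b) \<Rightarrow> nat \<Rightarrow> ('a \<Rightarrow> real) \<times> ('b \<Rightarrow> real)"
  assumes fin1: "finite A1" and fin2: "finite A2" and r: "r \<noteq> MM"
    and av: "avail1 r A1 s1" and b0: "b0 \<in> A2"
    and nf: "\<And>x j. nash r A1 A2 u1 u2 (fst (f x j)) (snd (f x j))"
    and R1: "\<And>\<tau>. avail1 r A1 \<tau> \<Longrightarrow>
       (\<Sum>a\<in>A1. \<tau> a * (u1 a b0 + (\<Sum>j<N. EU A1 A2 u1 (fst (f (a,b0) j)) (snd (f (a,b0) j)))))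
     \<le> (\<Sum>a\<in>A1. s1 a * (u1 a b0 + (\<Sum>j<N. EU A1 A2 u1 (fst (f (a,b0) j)) (snd (f (a,b0) j)))))"
    and R2: "\<And>b. b \<in> A2 \<Longrightarrow>
       (\<Sum>a\<in>A1. s1 a * (u2 a b + (\<Sum>j<N. EU A1 A2 u2 (fst (f (a,b) j)) (snd (f (a,b) j)))))
     \<le> (\<Sum>a\<in>A1. s1 a * (u2 a b0 + (\<Sum>j<N. EU A1 A2 u2 (fst (f (a,b0) j)) (snd (f (a,b0) j)))))"
  shows "SPE r A1 A2 u1 u2 (Suc N)
     (\<lambda>h. if h = [] then s1 else fst (f (hd h) (length h - 1)))
     (\<lambda>h. if h = [] then pt b0 else snd (f (hd h) (length h - 1)))"
proof -
  define \<mu>1 where "\<mu>1 = (\<lambda>h. if h = [] then s1 else fst (f (hd h) (length h - 1)))"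
  define \<mu>2 where "\<mu>2 = (\<lambda>h. if h = [] then pt b0 else snd (f (hd h) (length h - 1)))"
  have sum1: "sum (\<mu>1 g) A1 = 1" for g
    by (simp add: \<mu>1_def avail1_sum[OF fin1 av] avail1_sum[OF fin1 nash_avail1[OF nf]])
  have sum2: "sum (\<mu>2 g) A2 = 1" for g
    by (simp add: \<mu>2_def avail2_sum[OF fin2 avail2_pt[OF b0 r]] avail2_sum[OF fin2 nash_avail2[OF nf]])
  have repf: "g \<noteq> [] \<Longrightarrow> rep_payoff A1 A2 u \<mu>1 \<mu>2 g k
     = (\<Sum>j<k. EU A1 A2 u (fst (f (hd g) (length g - 1 + j))) (snd (f (hd g) (length g - 1 + j))))" for u g k
  proof (induction k arbitrary: g)
    case 0 then show ?case by simp
  next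
    case (Suc k)
    have IH: "rep_payoff A1 A2 u \<mu>1 \<mu>2 (g @ [x]) k
       = (\<Sum>j<k. EU A1 A2 u (fst (f (hd g) (length g + j))) (snd (f (hd g) (length g + j))))" for x
      using Suc.IH[of "g @ [x]"] Suc.prems by simp
    have "rep_payoff A1 A2 u \<mu>1 \<mu>2 g (Suc k) = EU A1 A2 u (\<mu>1 g) (\<mu>2 g)
       + (\<Sum>j<k. EU A1 A2 u (fst (f (hd g) (length g + j))) (snd (f (hd g) (length g + j))))"
      by (simp add: IH sum2_plus1 sum1 sum2)
    also have "\<dots> = (\<Sum>j<Suc k. EU A1 A2 u (fst (f (hd g) (length g - 1 + j))) (snd (f (hd g) (length g - 1 + j))))"
      using Suc.prems by (cases g) (simp_all add: sum.lessThan_Suc_shift \<mu>1_def \<mu>2_def del: sum.lessThan_Suc)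
    finally show ?case .
  qed
  have rep1: "rep_payoff A1 A2 u \<mu>1 \<mu>2 [x] N = (\<Sum>j<N. EU A1 A2 u (fst (f x j)) (snd (f x j)))" for u x
    by (simp add: repf)
  have m0: "\<mu>1 [] = s1" "\<mu>2 [] = pt b0" by (simp_all add: \<mu>1_def \<mu>2_def)
  have cont: "g \<noteq> [] \<Longrightarrow> \<exists>S. \<forall>x. rep_payoff A1 A2 u \<mu>1 \<mu>2 (g @ [x]) k = S" for u g k
    by (simp add: repf)
  show ?thesis unfolding \<mu>1_def[symmetric] \<mu>2_def[symmetric]
  proof (rule SPE_intro)
    show "strat1 r A1 \<mu>1" using av nash_avail1[OF nf] by (simp add: strat1_def \<mu>1_def)
    show "strat2 r A2 \<mu>2" using avail2_pt[OF b0 r] nash_avail2[OF nf] by (simp add: strat2_def \<mu>2_def)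
  next
    fix g :: "('a \<times> 'b) list" and k \<sigma>
    assume len: "length g + Suc k = Suc N" and s: "avail1 r A1 \<sigma>"
    show "(\<Sum>a1\<in>A1. \<Sum>a2\<in>A2. \<sigma> a1 * \<mu>2 g a2 * (u1 a1 a2 + rep_payoff A1 A2 u1 \<mu>1 \<mu>2 (g @ [(a1, a2)]) k))
         \<le> rep_payoff A1 A2 u1 \<mu>1 \<mu>2 g (Suc k)"
    proof (cases "g = []")
      case True
      then have kN: "k = N" using len by simp
      show ?thesis using R1[OF s] by (simp add: True kN rep1 m0 sum2_pt[OF fin2 b0])
    next
      case False
      obtain S where S: "\<And>x. rep_payoff A1 A2 u1 \<mu>1 \<mu>2 (g @ [x]) k = S" using cont[OF False] by blast
      have n: "nash r A1 A2 u1 u2 (\<mu>1 g) (\<mu>2 g)" using nf False by (simp add: \<mu>1_def \<mu>2_def)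
      then have "EU A1 A2 u1 \<sigma> (\<mu>2 g) \<le> EU A1 A2 u1 (\<mu>1 g) (\<mu>2 g)" using s by (simp add: nash_def)
      then show ?thesis
        by (simp add: S sum2_plus1 sum1 sum2 avail1_sum[OF fin1 s])
    qed
  next
    fix g :: "('a \<times> 'b) list" and k \<sigma>
    assume len: "length g + Suc k = Suc N" and s: "avail2 r A2 \<sigma>"
    show "(\<Sum>a1\<in>A1. \<Sum>a2\<in>A2. \<mu>1 g a1 * \<sigma> a2 * (u2 a1 a2 + rep_payoff A1 A2 u2 \<mu>1 \<mu>2 (g @ [(a1, a2)]) k))
         \<le> rep_payoff A1 A2 u2 \<mu>1 \<mu>2 g (Suc k)"
    proof (cases "g = []")
      case True
      then have kN: "k = N" using len by simp
      obtain b where b: "b \<in> A2" "\<sigma> = pt b" using avail2_pure[OF s r] by blast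
      show ?thesis using R2[OF b(1)] by (simp add: True kN rep1 m0 sum2_pt[OF fin2 b0] sum2_pt[OF fin2 b(1)] b(2))
    next
      case False
      obtain S where S: "\<And>x. rep_payoff A1 A2 u2 \<mu>1 \<mu>2 (g @ [x]) k = S" using cont[OF False] by blast
      have n: "nash r A1 A2 u1 u2 (\<mu>1 g) (\<mu>2 g)" using nf False by (simp add: \<mu>1_def \<mu>2_def)
      then have "EU A1 A2 u2 (\<mu>1 g) \<sigma> \<le> EU A1 A2 u2 (\<mu>1 g) (\<mu>2 g)" using s by (simp add: nash_def)
      then show ?thesis
        by (simp add: S sum2_plus1 sum1 sum2 avail2_sum[OF fin2 s])
    qed
  qed
qed

lemma gen_GLS:
  fixes f :: "('a \<times> 'b) \<Rightarrow> nat \<Rightarrow> ('a \<Rightarrow> real) \<times> ('b \<Rightarrow> real)"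
  assumes fin1: "finite A1" and fin2: "finite A2" and r: "r \<noteq> MM"
    and av: "avail1 r A1 s1" and b0: "b0 \<in> A2"
    and nf: "\<And>x j. nash r A1 A2 u1 u2 (fst (f x j)) (snd (f x j))"
    and R1: "\<And>\<tau>. avail1 r A1 \<tau> \<Longrightarrow>
       (\<Sum>a\<in>A1. \<tau> a * (u1 a b0 + (\<Sum>j<N. EU A1 A2 u1 (fst (f (a,b0) j)) (snd (f (a,b0) j)))))
     \<le> (\<Sum>a\<in>A1. s1 a * (u1 a b0 + (\<Sum>j<N. EU A1 A2 u1 (fst (f (a,b0) j)) (snd (f (a,b0) j)))))"
    and R2: "\<And>b. b \<in> A2 \<Longrightarrow>
       (\<Sum>a\<in>A1. s1 a * (u2 a b + (\<Sum>j<N. EU A1 A2 u2 (fst (f (a,b) j)) (snd (f (a,b) j)))))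
     \<le> (\<Sum>a\<in>A1. s1 a * (u2 a b0 + (\<Sum>j<N. EU A1 A2 u2 (fst (f (a,b0) j)) (snd (f (a,b0) j)))))"
    and nn: "\<not> nash r A1 A2 u1 u2 s1 (pt b0)"
  shows "G_LS r A1 A2 u1 u2"
  unfolding G_LS_def
  apply (rule exI[of _ "Suc N"])
  apply (intro conjI)
   apply simp
  apply (rule exI)+
  apply (rule conjI)
   apply (rule gen_SPE[OF assms(1-6) R1 R2])
    apply assumption+
  apply (rule exI[of _ "[]"])
  using nn by simp

lemma sum_lessThan_add: "(\<Sum>j<m+(n::nat). F j) = (\<Sum>j<m. F j) + (\<Sum>j<n. F (m+j))"
  by (induction n) (simp_all add: ac_simps)

lemma sum_two_blocks: "(\<Sum>j<M+M. G (if j < M then a else b)) = real M * G a + real M * (G b :: real)"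
  by (simp add: sum_lessThan_add)

lemma arch_M: "0 < (\<delta>::real) \<Longrightarrow> \<exists>M::nat. B \<le> real M * \<delta>"
  using reals_Archimedean3[of \<delta>] by (meson less_le)

lemma mto_lt: "more_than_one (V::real set) \<Longrightarrow> \<exists>x\<in>V. \<exists>y\<in>V. x < y"
proof (rule ccontr)
  assume m: "more_than_one V" and n: "\<not> (\<exists>x\<in>V. \<exists>y\<in>V. x < y)"
  then have eq: "\<And>x y. x \<in> V \<Longrightarrow> y \<in> V \<Longrightarrow> x = y" by (meson linorder_neqE_linordered_idom)
  show False
  proof (cases "V = {}")
    case True then show ?thesis using m by (simp add: more_than_one_def)
  next
    case False
    then obtain x where "x \<in> V" by blast
    then have "V = {x}" using eq by blast
    then show ?thesis using m by (simp add: more_than_one_def)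
  qed
qed

lemma V1_mem: "nash r A1 A2 u1 u2 p q \<Longrightarrow> EU A1 A2 u1 p q \<in> V1 r A1 A2 u1 u2"
  by (force simp: V1_def NashSet_def)
lemma V2_mem: "nash r A1 A2 u1 u2 p q \<Longrightarrow> EU A1 A2 u2 p q \<in> V2 r A1 A2 u1 u2"
  by (force simp: V2_def NashSet_def)
lemma V1_E: "x \<in> V1 r A1 A2 u1 u2 \<Longrightarrow> \<exists>p. nash r A1 A2 u1 u2 (fst p) (snd p) \<and> x = EU A1 A2 u1 (fst p) (snd p)"
  by (auto simp: V1_def NashSet_def)
lemma V2_E: "x \<in> V2 r A1 A2 u1 u2 \<Longrightarrow> \<exists>p. nash r A1 A2 u1 u2 (fst p) (snd p) \<and> x = EU A1 A2 u2 (fst p) (snd p)"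
  by (auto simp: V2_def NashSet_def)

lemma mto1_pair: "more_than_one (V1 r A1 A2 u1 u2) \<Longrightarrow> \<exists>pl ph. nash r A1 A2 u1 u2 (fst pl) (snd pl) \<and> nash r A1 A2 u1 u2 (fst ph) (snd ph)
   \<and> EU A1 A2 u1 (fst pl) (snd pl) < EU A1 A2 u1 (fst ph) (snd ph)"
  by (metis mto_lt V1_E)
lemma mto2_pair: "more_than_one (V2 r A1 A2 u1 u2) \<Longrightarrow> \<exists>pl ph. nash r A1 A2 u1 u2 (fst pl) (snd pl) \<and> nash r A1 A2 u1 u2 (fst ph) (snd ph)
   \<and> EU A1 A2 u2 (fst pl) (snd pl) < EU A1 A2 u2 (fst ph) (snd ph)"
  by (metis mto_lt V2_E)

lemma abs_le_sum: "finite A \<Longrightarrow> a \<in> A \<Longrightarrow> (g a::real) \<le> (\<Sum>x\<in>A. \<bar>g x\<bar>)"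
  by (rule order_trans[OF abs_ge_self member_le_sum[of a A "\<lambda>x. \<bar>g x\<bar>"]]) auto

lemma CI:
  assumes fin1: "finite A1" and fin2: "finite A2" and r: "r \<noteq> MM"
    and m1: "more_than_one (V1 r A1 A2 u1 u2)" and m2: "more_than_one (V2 r A1 A2 u1 u2)"
    and a1: "a1 \<in> A1" and a2: "a2 \<in> A2" and nn: "\<not> nash r A1 A2 u1 u2 (pt a1) (pt a2)"
  shows "G_LS r A1 A2 u1 u2"
proof -
  obtain pl ph where p: "nash r A1 A2 u1 u2 (fst pl) (snd pl)" "nash r A1 A2 u1 u2 (fst ph) (snd ph)"
    "EU A1 A2 u1 (fst pl) (snd pl) < EU A1 A2 u1 (fst ph) (snd ph)" using mto1_pair[OF m1] by blast
  obtain ql qh where q: "nash r A1 A2 u1 u2 (fst ql) (snd ql)" "nash r A1 A2 u1 u2 (fst qh) (snd qh)"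
    "EU A1 A2 u2 (fst ql) (snd ql) < EU A1 A2 u2 (fst qh) (snd qh)" using mto2_pair[OF m2] by blast
  define E1 where "E1 p = EU A1 A2 u1 (fst p) (snd p)" for p
  define E2 where "E2 p = EU A1 A2 u2 (fst p) (snd p)" for p
  define B1 where "B1 = (\<Sum>a\<in>A1. \<bar>u1 a a2 - u1 a1 a2\<bar>)"
  define B2 where "B2 = (\<Sum>b\<in>A2. \<bar>u2 a1 b - u2 a1 a2\<bar>)"
  obtain M1 :: nat where M1: "B1 \<le> real M1 * (E1 ph - E1 pl)" using arch_M[of "E1 ph - E1 pl"] p(3) by (auto simp: E1_def)
  obtain M2 :: nat where M2: "B2 \<le> real M2 * (E2 qh - E2 ql)" using arch_M[of "E2 qh - E2 ql"] q(3) by (auto simp: E2_def)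
  define M where "M = max M1 M2"
  have d1: "0 < E1 ph - E1 pl" "0 < E2 qh - E2 ql" using p(3) q(3) by (simp_all add: E1_def E2_def)
  have BM1: "B1 \<le> real M * (E1 ph - E1 pl)"
    by (rule order_trans[OF M1]) (rule mult_right_mono, use d1 in \<open>simp_all add: M_def\<close>)
  have BM2: "B2 \<le> real M * (E2 qh - E2 ql)"
    by (rule order_trans[OF M2]) (rule mult_right_mono, use d1 in \<open>simp_all add: M_def\<close>)
  define P where "P x = (if fst x \<noteq> a1 then pl else ph)" for x :: "'a \<times> 'b"
  define Q where "Q x = (if fst x = a1 \<and> snd x \<noteq> a2 then ql else qh)" for x :: "'a \<times> 'b"
  define f where "f x j = (if j < M then P x else Q x)" for x j
  have nf: "nash r A1 A2 u1 u2 (fst (f x j)) (snd (f x j))" for x j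
    using p q by (simp add: f_def P_def Q_def)
  have C: "(\<Sum>j<M+M. EU A1 A2 u (fst (f x j)) (snd (f x j))) =
      real M * EU A1 A2 u (fst (P x)) (snd (P x)) + real M * EU A1 A2 u (fst (Q x)) (snd (Q x))" for u x
    using sum_two_blocks[of "\<lambda>p. EU A1 A2 u (fst p) (snd p)" M "P x" "Q x"] by (simp add: f_def if_distrib)
  show ?thesis
  proof (rule gen_GLS[OF fin1 fin2 r avail1_pt[OF fin1 a1 r] a2 nf, where N = "M+M"])
    fix \<tau> assume t: "avail1 r A1 \<tau>"
    let ?v = "\<lambda>a. u1 a a2 + (\<Sum>j<M+M. EU A1 A2 u1 (fst (f (a, a2) j)) (snd (f (a, a2) j)))"
    have "?v a \<le> ?v a1" if "a \<in> A1" for a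
    proof (cases "a = a1")
      case False
      have "u1 a a2 - u1 a1 a2 \<le> B1" unfolding B1_def by (rule abs_le_sum[OF fin1 that])
      then show ?thesis using False BM1 by (simp add: C P_def Q_def E1_def algebra_simps)
    qed simp
    then have "(\<Sum>a\<in>A1. \<tau> a * ?v a) \<le> ?v a1"
      by (intro avg_le[OF fin1 avail1_nonneg[OF t] avail1_sum[OF fin1 t]])
    then show "(\<Sum>a\<in>A1. \<tau> a * ?v a) \<le> (\<Sum>a\<in>A1. pt a1 a * ?v a)" by (simp add: sum_pt[OF fin1 a1])
  next
    fix b assume b: "b \<in> A2"
    let ?w = "\<lambda>b. u2 a1 b + (\<Sum>j<M+M. EU A1 A2 u2 (fst (f (a1, b) j)) (snd (f (a1, b) j)))"
    have "?w b \<le> ?w a2"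
    proof (cases "b = a2")
      case False
      have "u2 a1 b - u2 a1 a2 \<le> B2" unfolding B2_def by (rule abs_le_sum[OF fin2 b])
      then show ?thesis using False BM2 by (simp add: C P_def Q_def E2_def algebra_simps)
    qed simp
    then show "(\<Sum>a\<in>A1. pt a1 a * (u2 a b + (\<Sum>j<M+M. EU A1 A2 u2 (fst (f (a, b) j)) (snd (f (a, b) j)))))
      \<le> (\<Sum>a\<in>A1. pt a1 a * (u2 a a2 + (\<Sum>j<M+M. EU A1 A2 u2 (fst (f (a, a2) j)) (snd (f (a, a2) j)))))"
      by (simp add: sum_pt[OF fin1 a1])
  qed (rule nn)
qed

lemma sum_mult_plus: "(\<Sum>a\<in>A. \<sigma> a * (g a + c)) = (\<Sum>a\<in>A. \<sigma> a * g a) + c * sum \<sigma> A" for c :: real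
  by (simp add: distrib_left sum.distrib sum_distrib_left sum_distrib_right ac_simps)

lemma card1_E: "card V = 1 \<Longrightarrow> \<exists>v. V = {v}" by (meson card_1_singletonE)

lemma CIII:
  assumes fin1: "finite A1" and fin2: "finite A2" and r: "r \<noteq> MM"
    and c1: "card (V1 r A1 A2 u1 u2) = 1" and m2: "more_than_one (V2 r A1 A2 u1 u2)"
    and s: "avail1 r A1 \<sigma>" and a2: "a2 \<in> A2" and a2': "a2' \<in> A2"
    and lt: "EU A1 A2 u2 \<sigma> (pt a2) < EU A1 A2 u2 \<sigma> (pt a2')"
    and br: "\<And>\<tau>. avail1 r A1 \<tau> \<Longrightarrow> EU A1 A2 u1 \<tau> (pt a2) \<le> EU A1 A2 u1 \<sigma> (pt a2)"
  shows "G_LS r A1 A2 u1 u2"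
proof -
  obtain v1 where v1: "V1 r A1 A2 u1 u2 = {v1}" using card1_E[OF c1] by blast
  obtain ql qh where q: "nash r A1 A2 u1 u2 (fst ql) (snd ql)" "nash r A1 A2 u1 u2 (fst qh) (snd qh)"
    "EU A1 A2 u2 (fst ql) (snd ql) < EU A1 A2 u2 (fst qh) (snd qh)" using mto2_pair[OF m2] by blast
  define E2 where "E2 p = EU A1 A2 u2 (fst p) (snd p)" for p
  define B where "B = (\<Sum>b\<in>A2. \<bar>EU A1 A2 u2 \<sigma> (pt b) - EU A1 A2 u2 \<sigma> (pt a2)\<bar>)"
  obtain M :: nat where M: "B \<le> real M * (E2 qh - E2 ql)" using arch_M[of "E2 qh - E2 ql"] q(3) by (auto simp: E2_def)
  define f where "f x j = (if snd x \<noteq> a2 then ql else qh)" for x :: "'a \<times> 'b" and j :: nat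
  have nf: "nash r A1 A2 u1 u2 (fst (f x j)) (snd (f x j))" for x j
    using q by (simp add: f_def)
  have C1: "(\<Sum>j<M. EU A1 A2 u1 (fst (f x j)) (snd (f x j))) = real M * v1" for x
  proof -
    have "EU A1 A2 u1 (fst (f x j)) (snd (f x j)) = v1" for j using V1_mem[OF nf[of x j]] v1 by simp
    then show ?thesis by simp
  qed
  have C2: "(\<Sum>j<M. EU A1 A2 u2 (fst (f x j)) (snd (f x j))) = real M * E2 (if snd x \<noteq> a2 then ql else qh)" for x
    by (simp add: f_def E2_def)
  have ss: "sum \<sigma> A1 = 1" using avail1_sum[OF fin1 s] .
  show ?thesis
  proof (rule gen_GLS[OF fin1 fin2 r s a2 nf, where N = M])
    fix \<tau> assume t: "avail1 r A1 \<tau>"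
    show "(\<Sum>a\<in>A1. \<tau> a * (u1 a a2 + (\<Sum>j<M. EU A1 A2 u1 (fst (f (a, a2) j)) (snd (f (a, a2) j)))))
      \<le> (\<Sum>a\<in>A1. \<sigma> a * (u1 a a2 + (\<Sum>j<M. EU A1 A2 u1 (fst (f (a, a2) j)) (snd (f (a, a2) j)))))"
      using br[OF t] by (simp add: C1 sum_mult_plus ss avail1_sum[OF fin1 t] EU_pt2[OF fin2 a2])
  next
    fix b assume b: "b \<in> A2"
    have "EU A1 A2 u2 \<sigma> (pt b) - EU A1 A2 u2 \<sigma> (pt a2) \<le> B" unfolding B_def
      by (rule abs_le_sum[OF fin2 b, of "\<lambda>b. EU A1 A2 u2 \<sigma> (pt b) - EU A1 A2 u2 \<sigma> (pt a2)"])
    then have "EU A1 A2 u2 \<sigma> (pt b) + real M * E2 (if b \<noteq> a2 then ql else qh) \<le> EU A1 A2 u2 \<sigma> (pt a2) + real M * E2 qh"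
      using M by (auto simp: algebra_simps)
    then show "(\<Sum>a\<in>A1. \<sigma> a * (u2 a b + (\<Sum>j<M. EU A1 A2 u2 (fst (f (a, b) j)) (snd (f (a, b) j)))))
      \<le> (\<Sum>a\<in>A1. \<sigma> a * (u2 a a2 + (\<Sum>j<M. EU A1 A2 u2 (fst (f (a, a2) j)) (snd (f (a, a2) j)))))"
      by (simp add: C2 sum_mult_plus ss EU_pt2[OF fin2 a2] EU_pt2[OF fin2 b])
  next
    show "\<not> nash r A1 A2 u1 u2 \<sigma> (pt a2)"
      using lt avail2_pt[OF a2' r] by (auto simp: nash_def)
  qed
qed

lemma sum_if_eq: "finite S \<Longrightarrow> (\<Sum>y\<in>S. if y = a then X y else Y y) = sum Y S + (if a \<in> S then X a - Y a else (0::real))"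
proof -
  assume fs: "finite S"
  have "(\<Sum>y\<in>S. if y = a then X y else Y y) = (\<Sum>y\<in>S. Y y + (if y = a then X y - Y y else 0))"
    by (rule sum.cong) auto
  also have "\<dots> = sum Y S + (if a \<in> S then X a - Y a else 0)"
    by (simp add: sum.distrib fs sum.delta)
  finally show ?thesis .
qed

lemma sum_list_concat': "sum_list (concat xss) = sum_list (map sum_list xss)" for xss :: "real list list"
  by (induction xss) simp_all

lemma sum_nth_pad: "length l = N \<Longrightarrow> (\<Sum>j<N. G (if j < length l then l ! j else d)) = sum_list (map G l)" for G :: "_ \<Rightarrow> real"
  by (simp add: sum_list_sum_nth atLeast0LessThan)

lemma support_sub: "avail1 r A \<sigma> \<Longrightarrow> support \<sigma> \<subseteq> A"
  using avail1_out by (fastforce simp: support_def)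

lemma CII:
  assumes fin1: "finite A1" and fin2: "finite A2" and r: "r \<noteq> MM"
    and m1: "more_than_one (V1 r A1 A2 u1 u2)" and c2: "card (V2 r A1 A2 u1 u2) = 1"
    and s: "avail1 r A1 \<sigma>" and a1': "a1' \<in> A1" and a2: "a2 \<in> A2"
    and lt: "EU A1 A2 u1 \<sigma> (pt a2) < u1 a1' a2"
    and br: "\<And>b. b \<in> A2 \<Longrightarrow> EU A1 A2 u2 \<sigma> (pt b) \<le> EU A1 A2 u2 \<sigma> (pt a2)"
    and a0: "a0 \<in> support \<sigma>"
    and dc: "\<And>a'. a' \<in> support \<sigma> - {a0} \<Longrightarrow> \<exists>ds. set ds \<subseteq>
         {EU A1 A2 u1 s1 s2 - EU A1 A2 u1 t1 t2 | s1 s2 t1 t2. (s1, s2) \<in> NashSet r A1 A2 u1 u2 \<and> (t1, t2) \<in> NashSet r A1 A2 u1 u2}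
         \<and> u1 a0 a2 - u1 a' a2 = sum_list ds"
  shows "G_LS r A1 A2 u1 u2"
proof -
  let ?D = "{EU A1 A2 u1 s1 s2 - EU A1 A2 u1 t1 t2 | s1 s2 t1 t2. (s1, s2) \<in> NashSet r A1 A2 u1 u2 \<and> (t1, t2) \<in> NashSet r A1 A2 u1 u2}"
  define E1 where "E1 p = EU A1 A2 u1 (fst p) (snd p)" for p
  define E2 where "E2 p = EU A1 A2 u2 (fst p) (snd p)" for p
  define isn where "isn p = nash r A1 A2 u1 u2 (fst p) (snd p)" for p
  obtain v2 where v2: "V2 r A1 A2 u1 u2 = {v2}" using card1_E[OF c2] by blast
  obtain pl ph where p: "isn pl" "isn ph" "E1 pl < E1 ph"
    using mto1_pair[OF m1] unfolding isn_def E1_def by blast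
  have sup: "support \<sigma> \<subseteq> A1" by (rule support_sub[OF s])
  have a0A: "a0 \<in> A1" using a0 sup by blast
  define S where "S = support \<sigma> - {a0}"
  have finS: "finite S" using sup fin1 by (auto simp: S_def intro: finite_subset)
  obtain xs where xs: "set xs = S" "distinct xs" using finite_distinct_list[OF finS] by blast
  define ds where "ds a' = (SOME ds. set ds \<subseteq> ?D \<and> u1 a0 a2 - u1 a' a2 = sum_list ds)" for a'
  have ds: "set (ds a') \<subseteq> ?D" "u1 a0 a2 - u1 a' a2 = sum_list (ds a')" if "a' \<in> S" for a'
    using someI_ex[OF dc[of a']] that by (auto simp: S_def ds_def)
  define st where "st d = (SOME pq. isn (fst pq) \<and> isn (snd pq) \<and> d = E1 (fst pq) - E1 (snd pq))" for d
  have st: "isn (fst (st d)) \<and> isn (snd (st d)) \<and> d = E1 (fst (st d)) - E1 (snd (st d))" if dD: "d \<in> ?D" for d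
  proof -
    obtain s1 s2 t1 t2 where "d = EU A1 A2 u1 s1 s2 - EU A1 A2 u1 t1 t2" "(s1, s2) \<in> NashSet r A1 A2 u1 u2" "(t1, t2) \<in> NashSet r A1 A2 u1 u2"
      using dD by blast
    then have "\<exists>pq. isn (fst pq) \<and> isn (snd pq) \<and> d = E1 (fst pq) - E1 (snd pq)"
      by (intro exI[of _ "((s1,s2),(t1,t2))"]) (simp add: isn_def E1_def NashSet_def)
    then show ?thesis unfolding st_def by (rule someI_ex)
  qed
  define PL where "PL a'' = map st (ds a'')" for a''
  define B where "B = (\<Sum>a\<in>A1. \<bar>u1 a a2 - u1 a0 a2\<bar>)"
  obtain M :: nat where M: "B \<le> real M * (E1 ph - E1 pl)" using arch_M[of "E1 ph - E1 pl"] p(3) by auto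
  define L where "L a = concat (map (\<lambda>a''. map (if a'' = a then fst else snd) (PL a'')) xs)
     @ replicate M (if a \<in> support \<sigma> then ph else pl)" for a
  define N where "N = sum_list (map (\<lambda>a''. length (PL a'')) xs) + M"
  have lenL: "length (L a) = N" for a
    by (simp add: L_def N_def length_concat comp_def)
  define f where "f x j = (if j < length (L (fst x)) then L (fst x) ! j else ph)" for x :: "'a \<times> 'b" and j
  have nL: "isn q" if qL: "q \<in> set (L a)" for a q
  proof -
    have "q \<in> set (concat (map (\<lambda>a''. map (if a'' = a then fst else snd) (PL a'')) xs)) \<or> q \<in> set (replicate M (if a \<in> support \<sigma> then ph else pl))"
      using qL unfolding L_def by simp
    moreover have "isn q" if qc: "q \<in> set (concat (map (\<lambda>a''. map (if a'' = a then fst else snd) (PL a'')) xs))"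
    proof -
      obtain a'' where a'': "a'' \<in> set xs" "q \<in> set (map (if a'' = a then fst else snd) (PL a''))"
        using qc by auto
      obtain d where d: "d \<in> set (ds a'')" "q = (if a'' = a then fst else snd) (st d)"
        using a''(2) unfolding PL_def by auto
      have "a'' \<in> S" using a''(1) xs(1) by simp
      then have "d \<in> ?D" using ds(1) d(1) by (meson subsetD)
      then show ?thesis using st[of d] d(2) by (cases "a'' = a") simp_all
    qed
    moreover have "isn q" if "q \<in> set (replicate M (if a \<in> support \<sigma> then ph else pl))"
      using that p(1,2) by (cases "a \<in> support \<sigma>") auto
    ultimately show ?thesis by blast
  qed
  have nf: "nash r A1 A2 u1 u2 (fst (f x j)) (snd (f x j))" for x j
  proof -
    have "isn (f x j)"
    proof (cases "j < length (L (fst x))")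
      case True then show ?thesis unfolding f_def using nL[of "L (fst x) ! j" "fst x"] nth_mem by simp
    next
      case False then show ?thesis unfolding f_def using p(2) by simp
    qed
    then show ?thesis by (simp add: isn_def)
  qed
  have C: "(\<Sum>j<N. G (fst (f x j)) (snd (f x j))) = sum_list (map (\<lambda>p. G (fst p) (snd p)) (L (fst x)))" for G :: "_ \<Rightarrow> _ \<Rightarrow> real" and x
    unfolding f_def using sum_nth_pad[OF lenL[of "fst x"], of "\<lambda>p. G (fst p) (snd p)" ph] by (simp add: if_distrib)
  define X where "X a'' = sum_list (map (E1 \<circ> fst) (PL a''))" for a''
  define Y where "Y a'' = sum_list (map (E1 \<circ> snd) (PL a''))" for a''
  define Tt where "Tt = sum Y S"
  have XY: "X a' - Y a' = u1 a0 a2 - u1 a' a2" if "a' \<in> S" for a'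
  proof -
    have "X a' - Y a' = sum_list (map (\<lambda>d. E1 (fst (st d)) - E1 (snd (st d))) (ds a'))"
      by (simp add: X_def Y_def PL_def sum_list_subtractf comp_def)
    also have "\<dots> = sum_list (map (\<lambda>d. d) (ds a'))"
      by (rule arg_cong[where f = sum_list], rule map_cong[OF refl]) (use st ds(1)[OF that] in force)
    finally show ?thesis using ds(2)[OF that] by simp
  qed
  have CL: "sum_list (map E1 (L a)) = Tt + (if a \<in> S then X a - Y a else 0) + real M * E1 (if a \<in> support \<sigma> then ph else pl)" for a
  proof -
    have "sum_list (map E1 (concat (map (\<lambda>a''. map (if a'' = a then fst else snd) (PL a'')) xs)))
        = sum_list (map (\<lambda>a''. if a'' = a then X a'' else Y a'') xs)"
      by (simp add: map_concat sum_list_concat' comp_def X_def Y_def if_distrib[of "\<lambda>g. sum_list (map (\<lambda>x. E1 (g x)) _)"] cong: if_cong)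
    also have "\<dots> = (\<Sum>a''\<in>S. if a'' = a then X a'' else Y a'')"
      using xs by (simp add: sum_list_distinct_conv_sum_set)
    also have "\<dots> = Tt + (if a \<in> S then X a - Y a else 0)" by (simp add: sum_if_eq[OF finS] Tt_def)
    finally show ?thesis by (simp add: L_def sum_list_replicate)
  qed
  define K where "K = u1 a0 a2 + Tt + real M * E1 ph"
  define val where "val a = u1 a a2 + (\<Sum>j<N. EU A1 A2 u1 (fst (f (a, a2) j)) (snd (f (a, a2) j)))" for a
  have val: "val a = u1 a a2 + sum_list (map E1 (L a))" for a
    unfolding val_def C E1_def by simp
  have vsup: "val a = K" if "a \<in> support \<sigma>" for a
  proof (cases "a = a0")
    case True then show ?thesis using that a0 by (simp add: val CL K_def S_def)
  next
    case False then have "a \<in> S" using that by (simp add: S_def)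
    then show ?thesis using that XY by (simp add: val CL K_def)
  qed
  have vle: "val a \<le> K" if "a \<in> A1" for a
  proof (cases "a \<in> support \<sigma>")
    case True then show ?thesis using vsup by simp
  next
    case False
    then have "a \<notin> S" by (simp add: S_def)
    have "u1 a a2 - u1 a0 a2 \<le> B" unfolding B_def by (rule abs_le_sum[OF fin1 that, of "\<lambda>a. u1 a a2 - u1 a0 a2"])
    then show ?thesis using False \<open>a \<notin> S\<close> M by (simp add: val CL K_def algebra_simps)
  qed
  have ss: "sum \<sigma> A1 = 1" using avail1_sum[OF fin1 s] .
  have vsig: "(\<Sum>a\<in>A1. \<sigma> a * val a) = K"
  proof -
    have "(\<Sum>a\<in>A1. \<sigma> a * val a) = (\<Sum>a\<in>A1. \<sigma> a * K)"
    proof (rule sum.cong[OF refl])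
      fix a assume "a \<in> A1"
      show "\<sigma> a * val a = \<sigma> a * K"
      proof (cases "0 < \<sigma> a")
        case True then show ?thesis using vsup by (simp add: support_def)
      next
        case False then have "\<sigma> a = 0" using avail1_nonneg[OF s, of a] by simp
        then show ?thesis by simp
      qed
    qed
    also have "\<dots> = K" by (simp add: sum_distrib_right[symmetric] ss)
    finally show ?thesis .
  qed
  have C2: "(\<Sum>j<N. EU A1 A2 u2 (fst (f x j)) (snd (f x j))) = real N * v2" for x
  proof -
    have "EU A1 A2 u2 (fst (f x j)) (snd (f x j)) = v2" for j using V2_mem[OF nf[of x j]] v2 by simp
    then show ?thesis by simp
  qed
  show ?thesis
  proof (rule gen_GLS[OF fin1 fin2 r s a2 nf, where N = N])
    fix \<tau> assume t: "avail1 r A1 \<tau>"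
    have "(\<Sum>a\<in>A1. \<tau> a * val a) \<le> K"
      by (rule avg_le[OF fin1 avail1_nonneg[OF t] avail1_sum[OF fin1 t] vle])
    then show "(\<Sum>a\<in>A1. \<tau> a * (u1 a a2 + (\<Sum>j<N. EU A1 A2 u1 (fst (f (a, a2) j)) (snd (f (a, a2) j)))))
      \<le> (\<Sum>a\<in>A1. \<sigma> a * (u1 a a2 + (\<Sum>j<N. EU A1 A2 u1 (fst (f (a, a2) j)) (snd (f (a, a2) j)))))"
      using vsig unfolding val_def by simp
  next
    fix b assume b: "b \<in> A2"
    show "(\<Sum>a\<in>A1. \<sigma> a * (u2 a b + (\<Sum>j<N. EU A1 A2 u2 (fst (f (a, b) j)) (snd (f (a, b) j)))))
      \<le> (\<Sum>a\<in>A1. \<sigma> a * (u2 a a2 + (\<Sum>j<N. EU A1 A2 u2 (fst (f (a, a2) j)) (snd (f (a, a2) j)))))"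
      using br[OF b] by (simp add: C2 sum_mult_plus ss EU_pt2[OF fin2 a2] EU_pt2[OF fin2 b])
  next
    show "\<not> nash r A1 A2 u1 u2 \<sigma> (pt a2)"
      using lt avail1_pt[OF fin1 a1' r] by (auto simp: nash_def EU_pt12[OF fin1 fin2 a1' a2] dest!: spec[of _ "pt a1'"])
  qed
qed

definition lsums :: "real set \<Rightarrow> nat \<Rightarrow> real set" where
  "lsums V k = {sum_list xs | xs. length xs = k \<and> set xs \<subseteq> V}"

lemma sum_list_const: "set xs \<subseteq> {v} \<Longrightarrow> sum_list xs = real (length xs) * v"
  by (induction xs) (auto simp: algebra_simps)

lemma lsums_single: "V \<subseteq> {v} \<Longrightarrow> x \<in> lsums V k \<Longrightarrow> x = real k * v"
proof -
  assume V: "V \<subseteq> {v}" and x: "x \<in> lsums V k"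
  then obtain xs where "x = sum_list xs" "length xs = k" "set xs \<subseteq> V" unfolding lsums_def by blast
  then show ?thesis using sum_list_const[of xs v] V by simp
qed

lemma lsums0: "0 \<in> lsums V 0"
  unfolding lsums_def by (rule CollectI, rule exI[of _ "[]"], simp)

lemma sum2_ptpt: "finite A1 \<Longrightarrow> finite A2 \<Longrightarrow> a \<in> A1 \<Longrightarrow> b \<in> A2 \<Longrightarrow>
  (\<Sum>a1\<in>A1. \<Sum>a2\<in>A2. pt a a1 * pt b a2 * F a1 a2) = (F a b :: real)"
  by (simp add: sum2_pt sum_pt)

lemma ex_pos: "finite A \<Longrightarrow> sum \<sigma> A = (1::real) \<Longrightarrow> \<exists>a\<in>A. 0 < \<sigma> a \<or> \<sigma> a < 0"
  by (metis less_linear sum.neutral zero_neq_one)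

lemma avail1_pos: "finite A \<Longrightarrow> avail1 r A \<sigma> \<Longrightarrow> \<exists>a\<in>A. 0 < \<sigma> a"
proof -
  assume "finite A" "avail1 r A \<sigma>"
  then obtain a where "a \<in> A" "0 < \<sigma> a \<or> \<sigma> a < 0" using ex_pos[of A \<sigma>] avail1_sum[of A r \<sigma>] by blast
  then show ?thesis using avail1_nonneg[OF \<open>avail1 r A \<sigma>\<close>, of a] by auto
qed

lemma stepB:
  assumes fin1: "finite A1" and fin2: "finite A2" and r: "r \<noteq> MM"
    and spe: "SPE r A1 A2 u1 u2 T \<mu>1 \<mu>2"
    and nsh: "\<And>g. set g \<subseteq> A1 \<times> A2 \<Longrightarrow> length g < T \<Longrightarrow> m < length g \<Longrightarrow> nash r A1 A2 u1 u2 (\<mu>1 g) (\<mu>2 g)"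
  shows "set g \<subseteq> A1 \<times> A2 \<Longrightarrow> length g + k = T \<Longrightarrow> m < length g \<Longrightarrow>
     rep_payoff A1 A2 u1 \<mu>1 \<mu>2 g k \<in> lsums (V1 r A1 A2 u1 u2) k \<and>
     (\<forall>v. V2 r A1 A2 u1 u2 \<subseteq> {v} \<longrightarrow> rep_payoff A1 A2 u2 \<mu>1 \<mu>2 g k = real k * v)"
proof (induction k arbitrary: g)
  case 0 then show ?case by (simp add: lsums0)
next
  case (Suc k)
  have s1: "strat1 r A1 \<mu>1" and s2: "strat2 r A2 \<mu>2" using spe by (simp_all add: SPE_def)
  have nr: "nash_rep r A1 A2 u1 u2 (Suc k) (\<lambda>h'. \<mu>1 (g @ h')) (\<lambda>h'. \<mu>2 (g @ h'))"
  proof -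
    have "nash_rep r A1 A2 u1 u2 (T - length g) (\<lambda>h'. \<mu>1 (g @ h')) (\<lambda>h'. \<mu>2 (g @ h'))"
      using spe Suc.prems(1,2) unfolding SPE_def by simp
    moreover have "T - length g = Suc k" using Suc.prems(2) by simp
    ultimately show ?thesis by simp
  qed
  have ng: "nash r A1 A2 u1 u2 (\<mu>1 g) (\<mu>2 g)" using nsh Suc.prems by simp
  have av: "avail1 r A1 (\<mu>1 g)" using s1 by (simp add: strat1_def)
  obtain b where b: "b \<in> A2" "\<mu>2 g = pt b" using avail2_pure[of r A2 "\<mu>2 g"] s2 r by (auto simp: strat2_def)
  define \<sigma> where "\<sigma> = \<mu>1 g"
  have ss: "sum \<sigma> A1 = 1" using avail1_sum[OF fin1 av] by (simp add: \<sigma>_def)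
  have nn: "\<And>a. 0 \<le> \<sigma> a" using avail1_nonneg[OF av] by (simp add: \<sigma>_def)
  define val where "val a = u1 a b + rep_payoff A1 A2 u1 \<mu>1 \<mu>2 (g @ [(a, b)]) k" for a
  have W: "rep_payoff A1 A2 u1 \<mu>1 \<mu>2 g (Suc k) = (\<Sum>a\<in>A1. \<sigma> a * val a)"
    by (simp add: b(2) sum2_pt[OF fin2 b(1)] val_def \<sigma>_def)
  have vle: "val a \<le> (\<Sum>a\<in>A1. \<sigma> a * val a)" if "a \<in> A1" for a
  proof -
    have "val a \<le> rep_payoff A1 A2 u1 \<mu>1 \<mu>2 g (Suc k)"
      using rd1[OF nr avail1_pt[OF fin1 that r] s1] unfolding b(2) sum2_ptpt[OF fin1 fin2 that b(1)] val_def .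
    then show ?thesis using W by simp
  qed
  obtain a0 where a0: "a0 \<in> A1" "0 < \<sigma> a0" using avail1_pos[OF fin1 av] by (auto simp: \<sigma>_def)
  have va0: "val a0 = rep_payoff A1 A2 u1 \<mu>1 \<mu>2 g (Suc k)"
    using avg_eq[OF fin1 nn ss vle a0] W by simp
  have ule: "u1 a b \<le> (\<Sum>a\<in>A1. \<sigma> a * u1 a b)" if "a \<in> A1" for a
  proof -
    have "EU A1 A2 u1 (pt a) (\<mu>2 g) \<le> EU A1 A2 u1 (\<mu>1 g) (\<mu>2 g)"
      using ng avail1_pt[OF fin1 that r] unfolding nash_def by blast
    then show ?thesis by (simp add: b(2) EU_pt2[OF fin2 b(1)] sum_pt[OF fin1 that] \<sigma>_def)
  qed
  have ua0: "u1 a0 b = EU A1 A2 u1 \<sigma> (pt b)"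
    using avg_eq[OF fin1 nn ss ule a0] by (simp add: EU_pt2[OF fin2 b(1)])
  have eV: "EU A1 A2 u1 \<sigma> (pt b) \<in> V1 r A1 A2 u1 u2" using V1_mem[OF ng] by (simp add: \<sigma>_def b(2))
  have IH: "rep_payoff A1 A2 u1 \<mu>1 \<mu>2 (g @ [(a, b)]) k \<in> lsums (V1 r A1 A2 u1 u2) k \<and>
     (\<forall>v. V2 r A1 A2 u1 u2 \<subseteq> {v} \<longrightarrow> rep_payoff A1 A2 u2 \<mu>1 \<mu>2 (g @ [(a, b)]) k = real k * v)" if "a \<in> A1" for a
    using Suc.IH[of "g @ [(a, b)]"] Suc.prems that b(1) by simp
  obtain xs where xs: "rep_payoff A1 A2 u1 \<mu>1 \<mu>2 (g @ [(a0, b)]) k = sum_list xs" "length xs = k" "set xs \<subseteq> V1 r A1 A2 u1 u2"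
    using IH[OF a0(1)] by (auto simp: lsums_def)
  have part1: "rep_payoff A1 A2 u1 \<mu>1 \<mu>2 g (Suc k) \<in> lsums (V1 r A1 A2 u1 u2) (Suc k)"
    unfolding lsums_def
    by (rule CollectI, rule exI[of _ "EU A1 A2 u1 \<sigma> (pt b) # xs"]) (use va0 xs eV ua0 in \<open>simp add: val_def\<close>)
  have part2: "rep_payoff A1 A2 u2 \<mu>1 \<mu>2 g (Suc k) = real (Suc k) * v" if v: "V2 r A1 A2 u1 u2 \<subseteq> {v}" for v
  proof -
    have "rep_payoff A1 A2 u2 \<mu>1 \<mu>2 g (Suc k) = (\<Sum>a\<in>A1. \<sigma> a * (u2 a b + real k * v))"
      using IH v by (simp add: b(2) sum2_pt[OF fin2 b(1)] \<sigma>_def)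
    also have "\<dots> = EU A1 A2 u2 \<sigma> (pt b) + real k * v"
      by (simp add: sum_mult_plus ss EU_pt2[OF fin2 b(1)])
    also have "EU A1 A2 u2 \<sigma> (pt b) = v" using V2_mem[OF ng] v by (auto simp: \<sigma>_def b(2))
    finally show ?thesis by (simp add: algebra_simps)
  qed
  show ?case using part1 part2 by blast
qed

lemma last_susp:
  assumes fin1: "finite A1" and fin2: "finite A2" and r: "r \<noteq> MM" and gl: "G_LS r A1 A2 u1 u2"
  obtains T \<mu>1 \<mu>2 h k where "SPE r A1 A2 u1 u2 T \<mu>1 \<mu>2" "set h \<subseteq> A1 \<times> A2" "length h + Suc k = T"
    "\<not> nash r A1 A2 u1 u2 (\<mu>1 h) (\<mu>2 h)"
    "\<And>x. x \<in> A1 \<times> A2 \<Longrightarrow> rep_payoff A1 A2 u1 \<mu>1 \<mu>2 (h @ [x]) k \<in> lsums (V1 r A1 A2 u1 u2) k"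
    "\<And>x v. x \<in> A1 \<times> A2 \<Longrightarrow> V2 r A1 A2 u1 u2 \<subseteq> {v} \<Longrightarrow> rep_payoff A1 A2 u2 \<mu>1 \<mu>2 (h @ [x]) k = real k * v"
proof -
  obtain T \<mu>1 \<mu>2 h0 where spe: "SPE r A1 A2 u1 u2 T \<mu>1 \<mu>2" and h0: "set h0 \<subseteq> A1 \<times> A2" "length h0 < T"
    "\<not> nash r A1 A2 u1 u2 (\<mu>1 h0) (\<mu>2 h0)"
    using gl by (auto simp: G_LS_def)
  let ?P = "\<lambda>g. set g \<subseteq> A1 \<times> A2 \<and> length g < T \<and> \<not> nash r A1 A2 u1 u2 (\<mu>1 g) (\<mu>2 g)"
  obtain h where h: "?P h" and mx: "\<And>y. ?P y \<Longrightarrow> length y \<le> length h"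
    using ex_has_greatest_nat[of ?P h0 length T] h0 by blast
  define k where "k = T - length h - 1"
  have lk: "length h + Suc k = T" using h by (simp add: k_def)
  have nsh: "\<And>g. set g \<subseteq> A1 \<times> A2 \<Longrightarrow> length g < T \<Longrightarrow> length h < length g \<Longrightarrow> nash r A1 A2 u1 u2 (\<mu>1 g) (\<mu>2 g)"
    using mx by (meson not_le)
  have B: "rep_payoff A1 A2 u1 \<mu>1 \<mu>2 (h @ [x]) k \<in> lsums (V1 r A1 A2 u1 u2) k \<and>
     (\<forall>v. V2 r A1 A2 u1 u2 \<subseteq> {v} \<longrightarrow> rep_payoff A1 A2 u2 \<mu>1 \<mu>2 (h @ [x]) k = real k * v)" if "x \<in> A1 \<times> A2" for x
  proof (rule stepB[OF fin1 fin2 r spe nsh])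
    show "set (h @ [x]) \<subseteq> A1 \<times> A2" using h that by simp
    show "length (h @ [x]) + k = T" using lk by simp
    show "length h < length (h @ [x])" by simp
  qed
  show ?thesis
  proof (rule that[OF spe _ lk])
    show "set h \<subseteq> A1 \<times> A2" using h by simp
    show "\<not> nash r A1 A2 u1 u2 (\<mu>1 h) (\<mu>2 h)" using h by simp
  qed (use B in blast)+
qed

lemma BR1:
  assumes fin1: "finite A1" and fin2: "finite A2"
    and spe: "SPE r A1 A2 u1 u2 T \<mu>1 \<mu>2" and h: "set h \<subseteq> A1 \<times> A2" "length h + Suc k = T"
    and c: "\<And>x. x \<in> A1 \<times> A2 \<Longrightarrow> rep_payoff A1 A2 u1 \<mu>1 \<mu>2 (h @ [x]) k = c"
    and t: "avail1 r A1 \<tau>"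
  shows "EU A1 A2 u1 \<tau> (\<mu>2 h) \<le> EU A1 A2 u1 (\<mu>1 h) (\<mu>2 h)"
proof -
  have s1: "strat1 r A1 \<mu>1" and s2: "strat2 r A2 \<mu>2" using spe by (simp_all add: SPE_def)
  have nr: "nash_rep r A1 A2 u1 u2 (Suc k) (\<lambda>h'. \<mu>1 (h @ h')) (\<lambda>h'. \<mu>2 (h @ h'))"
  proof -
    have "nash_rep r A1 A2 u1 u2 (T - length h) (\<lambda>h'. \<mu>1 (h @ h')) (\<lambda>h'. \<mu>2 (h @ h'))"
      using spe h unfolding SPE_def by simp
    moreover have "T - length h = Suc k" using h(2) by simp
    ultimately show ?thesis by simp
  qed
  have sm1: "sum (\<mu>1 h) A1 = 1" using s1 avail1_sum[OF fin1] unfolding strat1_def by blast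
  have sm2: "sum (\<mu>2 h) A2 = 1" using s2 avail2_sum[OF fin2] unfolding strat2_def by blast
  have e: "(\<Sum>a1\<in>A1. \<Sum>a2\<in>A2. p a1 * q a2 * (u1 a1 a2 + rep_payoff A1 A2 u1 \<mu>1 \<mu>2 (h @ [(a1, a2)]) k))
     = (\<Sum>a1\<in>A1. \<Sum>a2\<in>A2. p a1 * q a2 * (u1 a1 a2 + c))" for p q
    by (intro sum.cong refl) (simp add: c)
  show ?thesis
    using rd1[OF nr t s1] by (simp add: e sum2_plus1 sm1 sm2 avail1_sum[OF fin1 t])
qed

lemma BR2:
  assumes fin1: "finite A1" and fin2: "finite A2"
    and spe: "SPE r A1 A2 u1 u2 T \<mu>1 \<mu>2" and h: "set h \<subseteq> A1 \<times> A2" "length h + Suc k = T"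
    and c: "\<And>x. x \<in> A1 \<times> A2 \<Longrightarrow> rep_payoff A1 A2 u2 \<mu>1 \<mu>2 (h @ [x]) k = c"
    and t: "avail2 r A2 \<tau>"
  shows "EU A1 A2 u2 (\<mu>1 h) \<tau> \<le> EU A1 A2 u2 (\<mu>1 h) (\<mu>2 h)"
proof -
  have s1: "strat1 r A1 \<mu>1" and s2: "strat2 r A2 \<mu>2" using spe by (simp_all add: SPE_def)
  have nr: "nash_rep r A1 A2 u1 u2 (Suc k) (\<lambda>h'. \<mu>1 (h @ h')) (\<lambda>h'. \<mu>2 (h @ h'))"
  proof -
    have "nash_rep r A1 A2 u1 u2 (T - length h) (\<lambda>h'. \<mu>1 (h @ h')) (\<lambda>h'. \<mu>2 (h @ h'))"
      using spe h unfolding SPE_def by simp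
    moreover have "T - length h = Suc k" using h(2) by simp
    ultimately show ?thesis by simp
  qed
  have sm1: "sum (\<mu>1 h) A1 = 1" using s1 avail1_sum[OF fin1] unfolding strat1_def by blast
  have sm2: "sum (\<mu>2 h) A2 = 1" using s2 avail2_sum[OF fin2] unfolding strat2_def by blast
  have e: "(\<Sum>a1\<in>A1. \<Sum>a2\<in>A2. p a1 * q a2 * (u2 a1 a2 + rep_payoff A1 A2 u2 \<mu>1 \<mu>2 (h @ [(a1, a2)]) k))
     = (\<Sum>a1\<in>A1. \<Sum>a2\<in>A2. p a1 * q a2 * (u2 a1 a2 + c))" for p q
    by (intro sum.cong refl) (simp add: c)
  show ?thesis
    using rd2[OF nr t s2] by (simp add: e sum2_plus1 sm1 sm2 avail2_sum[OF fin2 t])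
qed

lemma SPE_nash_exists:
  assumes fin1: "finite A1" and fin2: "finite A2" and a: "a \<in> A1" and b: "b \<in> A2"
    and spe: "SPE r A1 A2 u1 u2 T \<mu>1 \<mu>2" and T: "1 \<le> T"
  shows "\<exists>p q. nash r A1 A2 u1 u2 p q"
proof -
  define h where "h = replicate (T - 1) (a, b)"
  have h: "set h \<subseteq> A1 \<times> A2" "length h + Suc 0 = T" using a b T by (auto simp: h_def)
  have s1: "strat1 r A1 \<mu>1" and s2: "strat2 r A2 \<mu>2" using spe by (simp_all add: SPE_def)
  have "nash r A1 A2 u1 u2 (\<mu>1 h) (\<mu>2 h)"
    unfolding nash_def
    using s1 s2 BR1[OF fin1 fin2 spe h, of 0] BR2[OF fin1 fin2 spe h, of 0]
    by (simp add: strat1_def strat2_def)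
  then show ?thesis by blast
qed

lemma tri: "V \<noteq> {} \<Longrightarrow> card V = 1 \<or> more_than_one V"
proof -
  assume ne: "V \<noteq> {}"
  show ?thesis
  proof (cases "finite V")
    case True then have "card V \<noteq> 0" using ne by simp
    then show ?thesis unfolding more_than_one_def by linarith
  qed (simp add: more_than_one_def)
qed

lemma card1_not_mto: "card V = 1 \<Longrightarrow> \<not> more_than_one V"
  unfolding more_than_one_def using card.infinite by fastforce

lemma V1_empty: "V1 r A1 A2 u1 u2 = {} \<longleftrightarrow> (\<forall>p q. \<not> nash r A1 A2 u1 u2 p q)"
  by (auto simp: V1_def NashSet_def)
lemma V2_empty: "V2 r A1 A2 u1 u2 = {} \<longleftrightarrow> (\<forall>p q. \<not> nash r A1 A2 u1 u2 p q)"
  by (auto simp: V2_def NashSet_def)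

lemma N_empty:
  assumes "finite A1" "finite A2" "a \<in> A1" "b \<in> A2" "\<forall>p q. \<not> nash r A1 A2 u1 u2 p q"
  shows "\<not> G_LS r A1 A2 u1 u2"
  using SPE_nash_exists[OF assms(1-4)] assms(5) unfolding G_LS_def by blast

lemma nash_from_BR:
  assumes "avail1 r A1 p" "avail2 r A2 q"
    "\<And>\<tau>. avail1 r A1 \<tau> \<Longrightarrow> EU A1 A2 u1 \<tau> q \<le> EU A1 A2 u1 p q"
    "\<And>\<tau>. avail2 r A2 \<tau> \<Longrightarrow> EU A1 A2 u2 p \<tau> \<le> EU A1 A2 u2 p q"
  shows "nash r A1 A2 u1 u2 p q"
  using assms by (simp add: nash_def)

lemma N_both1:
  assumes fin1: "finite A1" and fin2: "finite A2" and r: "r \<noteq> MM"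
    and c1: "card (V1 r A1 A2 u1 u2) = 1" and c2: "card (V2 r A1 A2 u1 u2) = 1"
  shows "\<not> G_LS r A1 A2 u1 u2"
proof
  assume gl: "G_LS r A1 A2 u1 u2"
  obtain v1 where v1: "V1 r A1 A2 u1 u2 = {v1}" using card1_E[OF c1] by blast
  obtain v2 where v2: "V2 r A1 A2 u1 u2 = {v2}" using card1_E[OF c2] by blast
  obtain T \<mu>1 \<mu>2 h k where spe: "SPE r A1 A2 u1 u2 T \<mu>1 \<mu>2" and h: "set h \<subseteq> A1 \<times> A2" "length h + Suc k = T"
    and nn: "\<not> nash r A1 A2 u1 u2 (\<mu>1 h) (\<mu>2 h)"
    and W1: "\<And>x. x \<in> A1 \<times> A2 \<Longrightarrow> rep_payoff A1 A2 u1 \<mu>1 \<mu>2 (h @ [x]) k \<in> lsums (V1 r A1 A2 u1 u2) k"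
    and W2: "\<And>x v. x \<in> A1 \<times> A2 \<Longrightarrow> V2 r A1 A2 u1 u2 \<subseteq> {v} \<Longrightarrow> rep_payoff A1 A2 u2 \<mu>1 \<mu>2 (h @ [x]) k = real k * v"
    using last_susp[OF fin1 fin2 r gl] by blast
  have c1': "\<And>x. x \<in> A1 \<times> A2 \<Longrightarrow> rep_payoff A1 A2 u1 \<mu>1 \<mu>2 (h @ [x]) k = real k * v1"
    using W1 lsums_single[of _ v1] v1 by blast
  have c2': "\<And>x. x \<in> A1 \<times> A2 \<Longrightarrow> rep_payoff A1 A2 u2 \<mu>1 \<mu>2 (h @ [x]) k = real k * v2"
    using W2 v2 by simp
  have "nash r A1 A2 u1 u2 (\<mu>1 h) (\<mu>2 h)"
    apply (rule nash_from_BR)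
    using spe apply (simp add: SPE_def strat1_def)
    using spe apply (simp add: SPE_def strat2_def)
     apply (rule BR1[OF fin1 fin2 spe h c1'], assumption+)
    apply (rule BR2[OF fin1 fin2 spe h c2'], assumption+)
    done
  then show False using nn by simp
qed

lemma br_support:
  assumes fin1: "finite A1" and fin2: "finite A2" and r: "r \<noteq> MM" and s: "avail1 r A1 \<sigma>" and b: "b \<in> A2"
    and br: "\<And>\<tau>. avail1 r A1 \<tau> \<Longrightarrow> EU A1 A2 u1 \<tau> (pt b) \<le> EU A1 A2 u1 \<sigma> (pt b)"
    and a: "a \<in> A1" "0 < \<sigma> a"
  shows "u1 a b = EU A1 A2 u1 \<sigma> (pt b)" "\<And>a'. a' \<in> A1 \<Longrightarrow> u1 a' b \<le> u1 a b"
proof -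
  have ule: "u1 a' b \<le> (\<Sum>a\<in>A1. \<sigma> a * u1 a b)" if "a' \<in> A1" for a'
    using br[OF avail1_pt[OF fin1 that r]] by (simp add: EU_pt2[OF fin2 b] sum_pt[OF fin1 that])
  show e: "u1 a b = EU A1 A2 u1 \<sigma> (pt b)"
    using avg_eq[OF fin1 avail1_nonneg[OF s] avail1_sum[OF fin1 s] ule a] by (simp add: EU_pt2[OF fin2 b])
  show "\<And>a'. a' \<in> A1 \<Longrightarrow> u1 a' b \<le> u1 a b" using ule e by (simp add: EU_pt2[OF fin2 b])
qed

lemma N2:
  assumes fin1: "finite A1" and fin2: "finite A2"
    and c2: "card (V2 PP A1 A2 u1 u2) = 1"
    and nt: "\<not> (\<exists>a1 a1' a2. a1 \<in> A1 \<and> a1' \<in> A1 \<and> a2 \<in> A2 \<and> u1 a1 a2 < u1 a1' a2 \<and>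
              (\<forall>b\<in>A2. u2 a1 b \<le> u2 a1 a2))"
  shows "\<not> G_LS PP A1 A2 u1 u2"
proof
  assume gl: "G_LS PP A1 A2 u1 u2"
  obtain v2 where v2: "V2 PP A1 A2 u1 u2 = {v2}" using card1_E[OF c2] by blast
  obtain T \<mu>1 \<mu>2 h k where spe: "SPE PP A1 A2 u1 u2 T \<mu>1 \<mu>2" and h: "set h \<subseteq> A1 \<times> A2" "length h + Suc k = T"
    and nn: "\<not> nash PP A1 A2 u1 u2 (\<mu>1 h) (\<mu>2 h)"
    and W1: "\<And>x. x \<in> A1 \<times> A2 \<Longrightarrow> rep_payoff A1 A2 u1 \<mu>1 \<mu>2 (h @ [x]) k \<in> lsums (V1 PP A1 A2 u1 u2) k"
    and W2: "\<And>x v. x \<in> A1 \<times> A2 \<Longrightarrow> V2 PP A1 A2 u1 u2 \<subseteq> {v} \<Longrightarrow> rep_payoff A1 A2 u2 \<mu>1 \<mu>2 (h @ [x]) k = real k * v"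
    using last_susp[OF fin1 fin2 _ gl] by blast
  have c2': "\<And>x. x \<in> A1 \<times> A2 \<Longrightarrow> rep_payoff A1 A2 u2 \<mu>1 \<mu>2 (h @ [x]) k = real k * v2"
    using W2 v2 by simp
  have av1: "avail1 PP A1 (\<mu>1 h)" and av2: "avail2 PP A2 (\<mu>2 h)" using spe by (simp_all add: SPE_def strat1_def strat2_def)
  obtain a1 where a1: "a1 \<in> A1" "\<mu>1 h = pt a1" using avail1_PP[OF av1] by blast
  obtain a2 where a2: "a2 \<in> A2" "\<mu>2 h = pt a2" using avail2_pure[OF av2] by blast
  have b2: "EU A1 A2 u2 (\<mu>1 h) \<tau> \<le> EU A1 A2 u2 (\<mu>1 h) (\<mu>2 h)" if "avail2 PP A2 \<tau>" for \<tau>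
    by (rule BR2[OF fin1 fin2 spe h c2' that])
  have u2le: "u2 a1 b \<le> u2 a1 a2" if "b \<in> A2" for b
    using b2[OF avail2_pt[OF that]] by (simp add: a1 a2 EU_pt12[OF fin1 fin2 a1(1) that] EU_pt12[OF fin1 fin2 a1(1) a2(1)])
  have u1le: "u1 a' a2 \<le> u1 a1 a2" if "a' \<in> A1" for a'
    using nt u2le a1(1) a2(1) that by (meson not_le)
  have "nash PP A1 A2 u1 u2 (\<mu>1 h) (\<mu>2 h)"
  proof (rule nash_from_BR[OF av1 av2])
    fix \<tau> assume "avail1 PP A1 \<tau>"
    then obtain a' where "a' \<in> A1" "\<tau> = pt a'" using avail1_PP by blast
    then show "EU A1 A2 u1 \<tau> (\<mu>2 h) \<le> EU A1 A2 u1 (\<mu>1 h) (\<mu>2 h)"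
      using u1le by (simp add: a1 a2 EU_pt12[OF fin1 fin2 _ a2(1)])
  qed (rule b2)
  then show False using nn by simp
qed

lemma N4:
  assumes fin1: "finite A1" and fin2: "finite A2"
    and v1: "V1 MP A1 A2 u1 u2 \<subseteq> {v1}"
    and nt: "\<And>a1 a2. a1 \<in> A1 \<Longrightarrow> a2 \<in> A2 \<Longrightarrow> (\<forall>a\<in>A1. u1 a a2 \<le> u1 a1 a2) \<Longrightarrow> (\<forall>b\<in>A2. u2 a1 b \<le> u2 a1 a2)"
  shows "\<not> G_LS MP A1 A2 u1 u2"
proof
  assume gl: "G_LS MP A1 A2 u1 u2"
  have r: "MP \<noteq> MM" by simp
  obtain T \<mu>1 \<mu>2 h k where spe: "SPE MP A1 A2 u1 u2 T \<mu>1 \<mu>2" and h: "set h \<subseteq> A1 \<times> A2" "length h + Suc k = T"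
    and nn: "\<not> nash MP A1 A2 u1 u2 (\<mu>1 h) (\<mu>2 h)"
    and W1: "\<And>x. x \<in> A1 \<times> A2 \<Longrightarrow> rep_payoff A1 A2 u1 \<mu>1 \<mu>2 (h @ [x]) k \<in> lsums (V1 MP A1 A2 u1 u2) k"
    and W2: "\<And>x v. x \<in> A1 \<times> A2 \<Longrightarrow> V2 MP A1 A2 u1 u2 \<subseteq> {v} \<Longrightarrow> rep_payoff A1 A2 u2 \<mu>1 \<mu>2 (h @ [x]) k = real k * v"
    using last_susp[OF fin1 fin2 r gl] by blast
  have c1': "\<And>x. x \<in> A1 \<times> A2 \<Longrightarrow> rep_payoff A1 A2 u1 \<mu>1 \<mu>2 (h @ [x]) k = real k * v1"
    using W1 lsums_single[OF v1] by simp
  have av1: "avail1 MP A1 (\<mu>1 h)" and av2: "avail2 MP A2 (\<mu>2 h)" using spe by (simp_all add: SPE_def strat1_def strat2_def)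
  obtain a2 where a2: "a2 \<in> A2" "\<mu>2 h = pt a2" using avail2_pure[OF av2 r] by blast
  have b1: "EU A1 A2 u1 \<tau> (pt a2) \<le> EU A1 A2 u1 (\<mu>1 h) (pt a2)" if "avail1 MP A1 \<tau>" for \<tau>
    using BR1[OF fin1 fin2 spe h c1' that] by (simp add: a2)
  have sup: "u2 a b \<le> u2 a a2" if "a \<in> A1" "0 < \<mu>1 h a" "b \<in> A2" for a b
    using nt[OF that(1) a2(1)] br_support(2)[OF fin1 fin2 r av1 a2(1) b1 that(1,2)] that(3) by blast
  have "nash MP A1 A2 u1 u2 (\<mu>1 h) (\<mu>2 h)"
  proof (rule nash_from_BR[OF av1 av2])
    fix \<tau> assume "avail1 MP A1 \<tau>" then show "EU A1 A2 u1 \<tau> (\<mu>2 h) \<le> EU A1 A2 u1 (\<mu>1 h) (\<mu>2 h)"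
      using b1 a2 by simp
  next
    fix \<tau> assume "avail2 MP A2 \<tau>"
    then obtain b where b: "b \<in> A2" "\<tau> = pt b" using avail2_pure[OF _ r] by blast
    have "(\<Sum>a\<in>A1. \<mu>1 h a * u2 a b) \<le> (\<Sum>a\<in>A1. \<mu>1 h a * u2 a a2)"
    proof (rule sum_mono)
      fix a assume a: "a \<in> A1"
      show "\<mu>1 h a * u2 a b \<le> \<mu>1 h a * u2 a a2"
      proof (cases "0 < \<mu>1 h a")
        case True then show ?thesis using sup[OF a True b(1)] by simp
      next
        case False then have "\<mu>1 h a = 0" using avail1_nonneg[OF av1, of a] by simp
        then show ?thesis by simp
      qed
    qed
    then show "EU A1 A2 u2 (\<mu>1 h) \<tau> \<le> EU A1 A2 u2 (\<mu>1 h) (\<mu>2 h)"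
      by (simp add: b(2) a2 EU_pt2[OF fin2 b(1)] EU_pt2[OF fin2 a2(1)])
  qed
  then show False using nn by simp
qed

lemma pureNE_intro:
  assumes fin1: "finite A1" and fin2: "finite A2" and a: "a \<in> A1" and b: "b \<in> A2"
    and h1: "\<And>a'. a' \<in> A1 \<Longrightarrow> u1 a' b \<le> u1 a b" and h2: "\<And>b'. b' \<in> A2 \<Longrightarrow> u2 a b' \<le> u2 a b"
  shows "nash PP A1 A2 u1 u2 (pt a) (pt b)"
proof (rule nash_from_BR)
  show "avail1 PP A1 (pt a)" using avail1_pt[OF fin1 a] by simp
  show "avail2 PP A2 (pt b)" using avail2_pt[OF b] by simp
  fix \<tau> assume "avail1 PP A1 \<tau>"
  then obtain a' where "a' \<in> A1" "\<tau> = pt a'" using avail1_PP by blast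
  then show "EU A1 A2 u1 \<tau> (pt b) \<le> EU A1 A2 u1 (pt a) (pt b)" using h1 by (simp add: EU_pt12[OF fin1 fin2 _ b] a)
next
  fix \<tau> assume "avail2 PP A2 \<tau>"
  then obtain b' where "b' \<in> A2" "\<tau> = pt b'" using avail2_pure by blast
  then show "EU A1 A2 u2 (pt a) \<tau> \<le> EU A1 A2 u2 (pt a) (pt b)" using h2 by (simp add: EU_pt12[OF fin1 fin2 a] b)
qed

lemma pureNE_dest:
  assumes fin1: "finite A1" and fin2: "finite A2" and a: "a \<in> A1" and b: "b \<in> A2"
    and n: "nash PP A1 A2 u1 u2 (pt a) (pt b)"
  shows "\<And>a'. a' \<in> A1 \<Longrightarrow> u1 a' b \<le> u1 a b" "\<And>b'. b' \<in> A2 \<Longrightarrow> u2 a b' \<le> u2 a b"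
proof -
  fix a' assume a': "a' \<in> A1"
  have "EU A1 A2 u1 (pt a') (pt b) \<le> EU A1 A2 u1 (pt a) (pt b)"
    using n avail1_pt[OF fin1 a'] unfolding nash_def by blast
  then show "u1 a' b \<le> u1 a b" by (simp add: EU_pt12[OF fin1 fin2 _ b] a a')
next
  fix b' assume b': "b' \<in> A2"
  have "EU A1 A2 u2 (pt a) (pt b') \<le> EU A1 A2 u2 (pt a) (pt b)"
    using n avail2_pt[OF b'] unfolding nash_def by blast
  then show "u2 a b' \<le> u2 a b" by (simp add: EU_pt12[OF fin1 fin2 a] b b')
qed

lemma V1MP_sub:
  assumes fin1: "finite A1" and fin2: "finite A2"
    and v1: "V1 PP A1 A2 u1 u2 \<subseteq> {v1}"
    and nt: "\<And>a1 a2. a1 \<in> A1 \<Longrightarrow> a2 \<in> A2 \<Longrightarrow> (\<forall>a\<in>A1. u1 a a2 \<le> u1 a1 a2) \<Longrightarrow> (\<forall>b\<in>A2. u2 a1 b \<le> u2 a1 a2)"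
  shows "V1 MP A1 A2 u1 u2 \<subseteq> {v1}"
proof
  fix x assume "x \<in> V1 MP A1 A2 u1 u2"
  then obtain p where n: "nash MP A1 A2 u1 u2 (fst p) (snd p)" and x: "x = EU A1 A2 u1 (fst p) (snd p)" using V1_E by blast
  have r: "MP \<noteq> MM" by simp
  have av1: "avail1 MP A1 (fst p)" using n by (simp add: nash_def)
  obtain b where b: "b \<in> A2" "snd p = pt b" using avail2_pure[OF nash_avail2[OF n] r] by blast
  obtain a where a: "a \<in> A1" "0 < fst p a" using avail1_pos[OF fin1 av1] by blast
  have br: "\<And>\<tau>. avail1 MP A1 \<tau> \<Longrightarrow> EU A1 A2 u1 \<tau> (pt b) \<le> EU A1 A2 u1 (fst p) (pt b)"
    using n b(2) by (simp add: nash_def)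
  note bs = br_support[OF fin1 fin2 r av1 b(1) br a]
  have "nash PP A1 A2 u1 u2 (pt a) (pt b)"
    by (rule pureNE_intro[OF fin1 fin2 a(1) b(1)]) (use bs(2) nt[OF a(1) b(1)] in auto)
  then have "u1 a b \<in> V1 PP A1 A2 u1 u2" using V1_mem[of PP A1 A2 u1 u2 "pt a" "pt b"] by (simp add: EU_pt12[OF fin1 fin2 a(1) b(1)])
  then show "x \<in> {v1}" using v1 bs(1) x b(2) by auto
qed

lemma N6:
  assumes fin1: "finite A1" and fin2: "finite A2"
    and all: "\<And>a1 a2. a1 \<in> A1 \<Longrightarrow> a2 \<in> A2 \<Longrightarrow> nash PP A1 A2 u1 u2 (pt a1) (pt a2)"
  shows "\<not> G_LS MP A1 A2 u1 u2"
proof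
  assume "G_LS MP A1 A2 u1 u2"
  then obtain T \<mu>1 \<mu>2 h where spe: "SPE MP A1 A2 u1 u2 T \<mu>1 \<mu>2" and nn: "\<not> nash MP A1 A2 u1 u2 (\<mu>1 h) (\<mu>2 h)"
    unfolding G_LS_def by blast
  have av1: "avail1 MP A1 (\<mu>1 h)" and av2: "avail2 MP A2 (\<mu>2 h)" using spe by (simp_all add: SPE_def strat1_def strat2_def)
  have r: "MP \<noteq> MM" by simp
  obtain b where b: "b \<in> A2" "\<mu>2 h = pt b" using avail2_pure[OF av2 r] by blast
  have eq1: "u1 a b = u1 a' b" if "a \<in> A1" "a' \<in> A1" "b \<in> A2" for a a' b
    using pureNE_dest(1)[OF fin1 fin2 that(1,3) all[OF that(1,3)] that(2)]
          pureNE_dest(1)[OF fin1 fin2 that(2,3) all[OF that(2,3)] that(1)] by simp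
  have eq2: "u2 a b = u2 a b'" if "a \<in> A1" "b \<in> A2" "b' \<in> A2" for a b b'
    using pureNE_dest(2)[OF fin1 fin2 that(1,2) all[OF that(1,2)] that(3)]
          pureNE_dest(2)[OF fin1 fin2 that(1,3) all[OF that(1,3)] that(2)] by simp
  have const1: "EU A1 A2 u1 \<tau> (pt b) = EU A1 A2 u1 (\<mu>1 h) (pt b)" if "avail1 MP A1 \<tau>" for \<tau>
  proof -
    obtain a0 where a0: "a0 \<in> A1" using avail1_pos[OF fin1 av1] by blast
    have "EU A1 A2 u1 \<sigma> (pt b) = u1 a0 b" if "avail1 MP A1 \<sigma>" for \<sigma>
    proof -
      have "(\<Sum>a\<in>A1. \<sigma> a * u1 a b) = (\<Sum>a\<in>A1. \<sigma> a * u1 a0 b)"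
        by (rule sum.cong[OF refl]) (simp add: eq1[OF _ a0 b(1)])
      then have "EU A1 A2 u1 \<sigma> (pt b) = (\<Sum>a\<in>A1. \<sigma> a * u1 a0 b)"
        by (simp add: EU_pt2[OF fin2 b(1)])
      also have "\<dots> = u1 a0 b" by (simp add: sum_distrib_right[symmetric] avail1_sum[OF fin1 that])
      finally show ?thesis .
    qed
    then show ?thesis using that av1 by simp
  qed
  have "nash MP A1 A2 u1 u2 (\<mu>1 h) (\<mu>2 h)"
  proof (rule nash_from_BR[OF av1 av2])
    fix \<tau> assume "avail1 MP A1 \<tau>" then show "EU A1 A2 u1 \<tau> (\<mu>2 h) \<le> EU A1 A2 u1 (\<mu>1 h) (\<mu>2 h)"
      using const1 b(2) by simp
  next
    fix \<tau> assume "avail2 MP A2 \<tau>"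
    then obtain b' where b': "b' \<in> A2" "\<tau> = pt b'" using avail2_pure[OF _ r] by blast
    have "(\<Sum>a\<in>A1. \<mu>1 h a * u2 a b') = (\<Sum>a\<in>A1. \<mu>1 h a * u2 a b)"
      by (rule sum.cong[OF refl]) (simp add: eq2[OF _ b(1) b'(1)])
    then have "EU A1 A2 u2 (\<mu>1 h) (pt b') = EU A1 A2 u2 (\<mu>1 h) (pt b)"
      by (simp add: EU_pt2[OF fin2 b'(1)] EU_pt2[OF fin2 b(1)])
    then show "EU A1 A2 u2 (\<mu>1 h) \<tau> \<le> EU A1 A2 u2 (\<mu>1 h) (\<mu>2 h)" using b b' by simp
  qed
  then show False using nn by simp
qed

lemma ex_max: "finite A \<Longrightarrow> A \<noteq> {} \<Longrightarrow> \<exists>a\<in>A. \<forall>x\<in>A. (g x::real) \<le> g a"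
proof -
  assume f: "finite A" "A \<noteq> {}"
  have "Max (g ` A) \<in> g ` A" using f by simp
  then obtain a where a: "a \<in> A" "g a = Max (g ` A)" by auto
  then show ?thesis using f by (metis Max_ge finite_imageI image_eqI)
qed

lemma ex_min: "finite A \<Longrightarrow> A \<noteq> {} \<Longrightarrow> \<exists>a\<in>A. \<forall>x\<in>A. g a \<le> (g x::real)"
proof -
  assume f: "finite A" "A \<noteq> {}"
  have "Min (g ` A) \<in> g ` A" using f by simp
  then obtain a where a: "a \<in> A" "g a = Min (g ` A)" by auto
  then show ?thesis using f by (metis Min_le finite_imageI image_eqI)
qed

lemma pureify:
  assumes fin1: "finite A1" and fin2: "finite A2" and ne1: "A1 \<noteq> {}"
    and s: "mixed A1 \<sigma>" and a2: "a2 \<in> A2" and nn: "\<not> nash MP A1 A2 u1 u2 \<sigma> (pt a2)"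
  shows "\<exists>a1\<in>A1. \<exists>b\<in>A2. \<not> nash MP A1 A2 u1 u2 (pt a1) (pt b)"
proof -
  have r: "MP \<noteq> MM" by simp
  have av1: "avail1 MP A1 \<sigma>" using s by (simp add: avail1_MP)
  have av2: "avail2 MP A2 (pt a2)" using avail2_pt[OF a2 r] .
  have nn': "\<not> (\<forall>\<tau>. avail1 MP A1 \<tau> \<longrightarrow> EU A1 A2 u1 \<tau> (pt a2) \<le> EU A1 A2 u1 \<sigma> (pt a2)) \<or>
        \<not> (\<forall>\<tau>. avail2 MP A2 \<tau> \<longrightarrow> EU A1 A2 u2 \<sigma> \<tau> \<le> EU A1 A2 u2 \<sigma> (pt a2))"
    using nn av1 av2 by (auto simp: nash_def)
  then show ?thesis
  proof
    assume "\<not> (\<forall>\<tau>. avail1 MP A1 \<tau> \<longrightarrow> EU A1 A2 u1 \<tau> (pt a2) \<le> EU A1 A2 u1 \<sigma> (pt a2))"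
    then obtain \<tau> where t: "avail1 MP A1 \<tau>" "EU A1 A2 u1 \<sigma> (pt a2) < EU A1 A2 u1 \<tau> (pt a2)" by auto
    obtain am where am: "am \<in> A1" "\<And>x. x \<in> A1 \<Longrightarrow> u1 am a2 \<le> u1 x a2" using ex_min[OF fin1 ne1, of "\<lambda>a. u1 a a2"] by blast
    have "u1 am a2 = (\<Sum>a\<in>A1. \<sigma> a * u1 am a2)" by (simp add: sum_distrib_right[symmetric] avail1_sum[OF fin1 av1])
    also have "\<dots> \<le> (\<Sum>a\<in>A1. \<sigma> a * u1 a a2)"
      by (rule sum_mono, rule mult_left_mono[OF am(2) avail1_nonneg[OF av1]])
    finally have le: "u1 am a2 \<le> EU A1 A2 u1 \<sigma> (pt a2)" by (simp add: EU_pt2[OF fin2 a2])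
    have "\<not> nash MP A1 A2 u1 u2 (pt am) (pt a2)"
    proof
      assume "nash MP A1 A2 u1 u2 (pt am) (pt a2)"
      then have "EU A1 A2 u1 \<tau> (pt a2) \<le> EU A1 A2 u1 (pt am) (pt a2)" using t(1) by (simp add: nash_def)
      then show False using le t(2) by (simp add: EU_pt12[OF fin1 fin2 am(1) a2])
    qed
    then show ?thesis using am(1) a2 by blast
  next
    assume "\<not> (\<forall>\<tau>. avail2 MP A2 \<tau> \<longrightarrow> EU A1 A2 u2 \<sigma> \<tau> \<le> EU A1 A2 u2 \<sigma> (pt a2))"
    then obtain \<tau> where t: "avail2 MP A2 \<tau>" "EU A1 A2 u2 \<sigma> (pt a2) < EU A1 A2 u2 \<sigma> \<tau>" by auto
    obtain b where b: "b \<in> A2" "\<tau> = pt b" using avail2_pure[OF t(1) r] by blast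
    have "0 < (\<Sum>a\<in>A1. \<sigma> a * (u2 a b - u2 a a2))"
      using t(2) by (simp add: b EU_pt2[OF fin2 b(1)] EU_pt2[OF fin2 a2] right_diff_distrib sum_subtractf)
    then obtain a where a: "a \<in> A1" "u2 a a2 < u2 a b"
    proof -
      assume th: "\<And>a. a \<in> A1 \<Longrightarrow> u2 a a2 < u2 a b \<Longrightarrow> thesis"
      assume pos: "0 < (\<Sum>a\<in>A1. \<sigma> a * (u2 a b - u2 a a2))"
      show thesis
      proof (rule ccontr)
        assume "\<not> thesis"
        then have "\<forall>a\<in>A1. u2 a b - u2 a a2 \<le> 0" using th by force
        then have "(\<Sum>a\<in>A1. \<sigma> a * (u2 a b - u2 a a2)) \<le> 0"
          by (intro sum_nonpos mult_nonneg_nonpos avail1_nonneg[OF av1]) simp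
        then show False using pos by simp
      qed
    qed
    have "\<not> nash MP A1 A2 u1 u2 (pt a) (pt a2)"
    proof
      assume "nash MP A1 A2 u1 u2 (pt a) (pt a2)"
      then have "EU A1 A2 u2 (pt a) (pt b) \<le> EU A1 A2 u2 (pt a) (pt a2)" using avail2_pt[OF b(1) r] by (simp add: nash_def)
      then show False using a by (simp add: EU_pt12[OF fin1 fin2 a(1) a2] EU_pt12[OF fin1 fin2 a(1) b(1)])
    qed
    then show ?thesis using a(1) a2 by blast
  qed
qed

lemma support_pt: "support (pt a) = {a}" by (auto simp: support_def pt_def)

lemma CMP_suff:
  assumes fin1: "finite A1" and fin2: "finite A2" and ne1: "A1 \<noteq> {}" and C: "C_mp A1 A2 u1 u2"
  shows "G_LS MP A1 A2 u1 u2"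
proof -
  have r: "MP \<noteq> MM" by simp
  let ?D = "{EU A1 A2 u1 s1 s2 - EU A1 A2 u1 t1 t2 | s1 s2 t1 t2. (s1, s2) \<in> NashSet MP A1 A2 u1 u2 \<and> (t1, t2) \<in> NashSet MP A1 A2 u1 u2}"
  from C consider
    (i) "more_than_one (V1 MP A1 A2 u1 u2)" "more_than_one (V2 MP A1 A2 u1 u2)"
        "\<exists>\<sigma>1 a2. mixed A1 \<sigma>1 \<and> a2 \<in> A2 \<and> (\<sigma>1, pt a2) \<notin> NashSet MP A1 A2 u1 u2"
  | (ii) "more_than_one (V1 MP A1 A2 u1 u2)" "card (V2 MP A1 A2 u1 u2) = 1"
        "\<exists>\<sigma>1 a1' a2. mixed A1 \<sigma>1 \<and> a1' \<in> A1 \<and> a2 \<in> A2 \<and>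
           EU A1 A2 u1 \<sigma>1 (pt a2) < u1 a1' a2 \<and>
           (\<forall>b\<in>A2. EU A1 A2 u2 \<sigma>1 (pt b) \<le> EU A1 A2 u2 \<sigma>1 (pt a2)) \<and>
           (1 < card (support \<sigma>1) \<longrightarrow>
              (\<exists>a\<in>support \<sigma>1. \<forall>a'\<in>support \<sigma>1 - {a}.
                 \<exists>ds. set ds \<subseteq> ?D \<and> u1 a a2 - u1 a' a2 = sum_list ds))"
  | (iii) "card (V1 MP A1 A2 u1 u2) = 1" "more_than_one (V2 MP A1 A2 u1 u2)"
        "\<exists>\<sigma>1 a2 a2'. mixed A1 \<sigma>1 \<and> a2 \<in> A2 \<and> a2' \<in> A2 \<and>
           EU A1 A2 u2 \<sigma>1 (pt a2) < EU A1 A2 u2 \<sigma>1 (pt a2') \<and>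
           (\<forall>\<tau>. mixed A1 \<tau> \<longrightarrow> EU A1 A2 u1 \<tau> (pt a2) \<le> EU A1 A2 u1 \<sigma>1 (pt a2))"
    unfolding C_mp_def Let_def by blast
  then show ?thesis
  proof cases
    case i
    then obtain \<sigma> a2 where s: "mixed A1 \<sigma>" "a2 \<in> A2" "(\<sigma>, pt a2) \<notin> NashSet MP A1 A2 u1 u2" by blast
    then have "\<not> nash MP A1 A2 u1 u2 \<sigma> (pt a2)" by (simp add: NashSet_def)
    then obtain a1 b where "a1 \<in> A1" "b \<in> A2" "\<not> nash MP A1 A2 u1 u2 (pt a1) (pt b)"
      using pureify[OF fin1 fin2 ne1 s(1,2)] by blast
    then show ?thesis using CI[OF fin1 fin2 r i(1,2)] by blast
  next
    case ii
    then obtain \<sigma> a1' a2 where s: "mixed A1 \<sigma>" "a1' \<in> A1" "a2 \<in> A2"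
      "EU A1 A2 u1 \<sigma> (pt a2) < u1 a1' a2"
      "\<forall>b\<in>A2. EU A1 A2 u2 \<sigma> (pt b) \<le> EU A1 A2 u2 \<sigma> (pt a2)"
      "1 < card (support \<sigma>) \<longrightarrow> (\<exists>a\<in>support \<sigma>. \<forall>a'\<in>support \<sigma> - {a}.
                 \<exists>ds. set ds \<subseteq> ?D \<and> u1 a a2 - u1 a' a2 = sum_list ds)" by blast
    have av: "avail1 MP A1 \<sigma>" using s(1) by (simp add: avail1_MP)
    have fs: "finite (support \<sigma>)" using support_sub[OF av] fin1 finite_subset by blast
    obtain a0 where a0: "a0 \<in> support \<sigma>" "\<forall>a'\<in>support \<sigma> - {a0}. \<exists>ds. set ds \<subseteq> ?D \<and> u1 a0 a2 - u1 a' a2 = sum_list ds"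
    proof (cases "1 < card (support \<sigma>)")
      case True then show ?thesis using s(6) that by blast
    next
      case False
      obtain a where a: "a \<in> A1" "0 < \<sigma> a" using avail1_pos[OF fin1 av] by blast
      then have as: "a \<in> support \<sigma>" by (simp add: support_def)
      have "card (support \<sigma>) \<le> Suc 0" using False by simp
      then have "support \<sigma> = {a}" using as fs card_le_Suc0_iff_eq by blast
      then show ?thesis using that[of a] as by simp
    qed
    show ?thesis
      by (rule CII[OF fin1 fin2 r ii(1,2) av s(2,3,4) _ a0(1)]) (use s(5) a0(2) in blast)+
  next
    case iii
    then obtain \<sigma> a2 a2' where s: "mixed A1 \<sigma>" "a2 \<in> A2" "a2' \<in> A2"
      "EU A1 A2 u2 \<sigma> (pt a2) < EU A1 A2 u2 \<sigma> (pt a2')"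
      "\<forall>\<tau>. mixed A1 \<tau> \<longrightarrow> EU A1 A2 u1 \<tau> (pt a2) \<le> EU A1 A2 u1 \<sigma> (pt a2)" by blast
    show ?thesis
      by (rule CIII[OF fin1 fin2 r iii(1,2) _ s(2,3,4)]) (use s(1,5) in \<open>simp_all add: avail1_MP\<close>)
  qed
qed

lemma sum_list_zip_diff: "length xs = length ys \<Longrightarrow>
  sum_list (map (\<lambda>(x, y). x - y) (zip xs ys)) = sum_list xs - (sum_list ys :: real)"
proof (induction xs arbitrary: ys)
  case Nil then show ?case by simp
next
  case (Cons a xs)
  then obtain y ys' where "ys = y # ys'" "length xs = length ys'" by (cases ys) auto
  then show ?case using Cons.IH by simp
qed

lemma GMP:
  assumes fin1: "finite A1" and fin2: "finite A2" and a: "a \<in> A1" and b: "b \<in> A2"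
    and gl: "G_LS MP A1 A2 u1 u2"
  shows "C_mp A1 A2 u1 u2"
proof -
  have r: "MP \<noteq> MM" by simp
  let ?D = "{EU A1 A2 u1 s1 s2 - EU A1 A2 u1 t1 t2 | s1 s2 t1 t2. (s1, s2) \<in> NashSet MP A1 A2 u1 u2 \<and> (t1, t2) \<in> NashSet MP A1 A2 u1 u2}"
  obtain T \<mu>1 \<mu>2 h k where spe: "SPE MP A1 A2 u1 u2 T \<mu>1 \<mu>2" and h: "set h \<subseteq> A1 \<times> A2" "length h + Suc k = T"
    and nn: "\<not> nash MP A1 A2 u1 u2 (\<mu>1 h) (\<mu>2 h)"
    and W1: "\<And>x. x \<in> A1 \<times> A2 \<Longrightarrow> rep_payoff A1 A2 u1 \<mu>1 \<mu>2 (h @ [x]) k \<in> lsums (V1 MP A1 A2 u1 u2) k"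
    and W2: "\<And>x v. x \<in> A1 \<times> A2 \<Longrightarrow> V2 MP A1 A2 u1 u2 \<subseteq> {v} \<Longrightarrow> rep_payoff A1 A2 u2 \<mu>1 \<mu>2 (h @ [x]) k = real k * v"
    using last_susp[OF fin1 fin2 r gl] by blast
  have s1: "strat1 MP A1 \<mu>1" and s2: "strat2 MP A2 \<mu>2" using spe by (simp_all add: SPE_def)
  have av1: "avail1 MP A1 (\<mu>1 h)" and av2: "avail2 MP A2 (\<mu>2 h)" using s1 s2 by (simp_all add: strat1_def strat2_def)
  obtain a2 where a2: "a2 \<in> A2" "\<mu>2 h = pt a2" using avail2_pure[OF av2 r] by blast
  define \<sigma> where "\<sigma> = \<mu>1 h"
  have mx: "mixed A1 \<sigma>" using av1 by (simp add: \<sigma>_def avail1_MP)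
  have "\<exists>p q. nash MP A1 A2 u1 u2 p q" using SPE_nash_exists[OF fin1 fin2 a b spe] h(2) by simp
  then have ne: "V1 MP A1 A2 u1 u2 \<noteq> {}" "V2 MP A1 A2 u1 u2 \<noteq> {}"
    unfolding V1_empty V2_empty by blast+
  have nn': "\<not> nash MP A1 A2 u1 u2 \<sigma> (pt a2)" using nn by (simp add: \<sigma>_def a2(2))
  show ?thesis
    unfolding C_mp_def Let_def
  proof -
    consider "more_than_one (V1 MP A1 A2 u1 u2)" "more_than_one (V2 MP A1 A2 u1 u2)"
      | "more_than_one (V1 MP A1 A2 u1 u2)" "card (V2 MP A1 A2 u1 u2) = 1"
      | "card (V1 MP A1 A2 u1 u2) = 1" "more_than_one (V2 MP A1 A2 u1 u2)"
      | "card (V1 MP A1 A2 u1 u2) = 1" "card (V2 MP A1 A2 u1 u2) = 1"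
      using tri[OF ne(1)] tri[OF ne(2)] by blast
    then show "(more_than_one (V1 MP A1 A2 u1 u2) \<and> more_than_one (V2 MP A1 A2 u1 u2) \<and>
        (\<exists>\<sigma>1 a2. mixed A1 \<sigma>1 \<and> a2 \<in> A2 \<and> (\<sigma>1, pt a2) \<notin> NashSet MP A1 A2 u1 u2))
   \<or> (more_than_one (V1 MP A1 A2 u1 u2) \<and> card (V2 MP A1 A2 u1 u2) = 1 \<and>
        (\<exists>\<sigma>1 a1' a2. mixed A1 \<sigma>1 \<and> a1' \<in> A1 \<and> a2 \<in> A2 \<and>
           EU A1 A2 u1 \<sigma>1 (pt a2) < u1 a1' a2 \<and>
           (\<forall>b\<in>A2. EU A1 A2 u2 \<sigma>1 (pt b) \<le> EU A1 A2 u2 \<sigma>1 (pt a2)) \<and>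
           (1 < card (support \<sigma>1) \<longrightarrow>
              (\<exists>a\<in>support \<sigma>1. \<forall>a'\<in>support \<sigma>1 - {a}.
                 \<exists>ds. set ds \<subseteq> ?D \<and> u1 a a2 - u1 a' a2 = sum_list ds))))
   \<or> (card (V1 MP A1 A2 u1 u2) = 1 \<and> more_than_one (V2 MP A1 A2 u1 u2) \<and>
        (\<exists>\<sigma>1 a2 a2'. mixed A1 \<sigma>1 \<and> a2 \<in> A2 \<and> a2' \<in> A2 \<and>
           EU A1 A2 u2 \<sigma>1 (pt a2) < EU A1 A2 u2 \<sigma>1 (pt a2') \<and>
           (\<forall>\<tau>. mixed A1 \<tau> \<longrightarrow> EU A1 A2 u1 \<tau> (pt a2) \<le> EU A1 A2 u1 \<sigma>1 (pt a2))))"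
    proof cases
      case 1
      have "(\<sigma>, pt a2) \<notin> NashSet MP A1 A2 u1 u2" using nn' by (simp add: NashSet_def)
      then show ?thesis using 1 mx a2(1) by blast
    next
      case 2
      obtain v2 where v2: "V2 MP A1 A2 u1 u2 = {v2}" using card1_E[OF 2(2)] by blast
      have c2': "\<And>x. x \<in> A1 \<times> A2 \<Longrightarrow> rep_payoff A1 A2 u2 \<mu>1 \<mu>2 (h @ [x]) k = real k * v2"
        using W2 v2 by simp
      have br: "\<forall>b\<in>A2. EU A1 A2 u2 \<sigma> (pt b) \<le> EU A1 A2 u2 \<sigma> (pt a2)"
        using BR2[OF fin1 fin2 spe h c2' avail2_pt[OF _ r]] by (simp add: \<sigma>_def a2(2))
      have "\<exists>\<tau>. avail1 MP A1 \<tau> \<and> EU A1 A2 u1 \<sigma> (pt a2) < EU A1 A2 u1 \<tau> (pt a2)"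
      proof (rule ccontr)
        assume "\<not> ?thesis"
        then have "nash MP A1 A2 u1 u2 \<sigma> (pt a2)"
          using av1 av2 br a2 unfolding nash_def \<sigma>_def by (auto simp: not_less avail2_MP pure_def)
        then show False using nn' by simp
      qed
      then obtain \<tau> where t: "avail1 MP A1 \<tau>" "EU A1 A2 u1 \<sigma> (pt a2) < EU A1 A2 u1 \<tau> (pt a2)" by blast
      have ne1: "A1 \<noteq> {}" using a by blast
      obtain a1' where a1': "a1' \<in> A1" "\<And>x. x \<in> A1 \<Longrightarrow> u1 x a2 \<le> u1 a1' a2"
        using ex_max[OF fin1 ne1, of "\<lambda>x. u1 x a2"] by blast
      have "EU A1 A2 u1 \<tau> (pt a2) \<le> u1 a1' a2"
        unfolding EU_pt2[OF fin2 a2(1)]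
        by (rule avg_le[OF fin1 avail1_nonneg[OF t(1)] avail1_sum[OF fin1 t(1)] a1'(2)])
      then have lt: "EU A1 A2 u1 \<sigma> (pt a2) < u1 a1' a2" using t(2) by simp
      define val where "val x = u1 x a2 + rep_payoff A1 A2 u1 \<mu>1 \<mu>2 (h @ [(x, a2)]) k" for x
      have nr: "nash_rep MP A1 A2 u1 u2 (Suc k) (\<lambda>h'. \<mu>1 (h @ h')) (\<lambda>h'. \<mu>2 (h @ h'))"
      proof -
        have "nash_rep MP A1 A2 u1 u2 (T - length h) (\<lambda>h'. \<mu>1 (h @ h')) (\<lambda>h'. \<mu>2 (h @ h'))"
          using spe h unfolding SPE_def by simp
        moreover have "T - length h = Suc k" using h(2) by simp
        ultimately show ?thesis by simp
      qed
      have Wv: "rep_payoff A1 A2 u1 \<mu>1 \<mu>2 h (Suc k) = (\<Sum>x\<in>A1. \<sigma> x * val x)"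
        by (simp add: a2(2) sum2_pt[OF fin2 a2(1)] val_def \<sigma>_def)
      have vle: "val x \<le> (\<Sum>x\<in>A1. \<sigma> x * val x)" if "x \<in> A1" for x
      proof -
        have "val x \<le> rep_payoff A1 A2 u1 \<mu>1 \<mu>2 h (Suc k)"
          using rd1[OF nr avail1_pt[OF fin1 that r] s1] unfolding a2(2) sum2_ptpt[OF fin1 fin2 that a2(1)] val_def .
        then show ?thesis using Wv by simp
      qed
      have veq: "val x = (\<Sum>x\<in>A1. \<sigma> x * val x)" if "x \<in> support \<sigma>" for x
      proof -
        have nnS: "\<And>x. 0 \<le> \<sigma> x" using avail1_nonneg[OF av1] by (simp add: \<sigma>_def)
        have sS: "sum \<sigma> A1 = 1" using avail1_sum[OF fin1 av1] by (simp add: \<sigma>_def)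
        have "x \<in> A1" "0 < \<sigma> x" using that support_sub[OF av1] by (auto simp: support_def \<sigma>_def)
        then show ?thesis using avg_eq[OF fin1 nnS sS vle] by blast
      qed
      have dc: "\<exists>a0\<in>support \<sigma>. \<forall>a'\<in>support \<sigma> - {a0}. \<exists>ds. set ds \<subseteq> ?D \<and> u1 a0 a2 - u1 a' a2 = sum_list ds"
        if cs: "1 < card (support \<sigma>)"
      proof -
        obtain a0 where a0: "a0 \<in> support \<sigma>" using cs by (metis card.empty ex_in_conv not_less0)
        have "\<exists>ds. set ds \<subseteq> ?D \<and> u1 a0 a2 - u1 a' a2 = sum_list ds" if a': "a' \<in> support \<sigma> - {a0}" for a'
        proof -
          have A: "a0 \<in> A1" "a' \<in> A1" using a0 a' support_sub[OF av1] by (auto simp: \<sigma>_def)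
          obtain xs0 where xs0: "rep_payoff A1 A2 u1 \<mu>1 \<mu>2 (h @ [(a0, a2)]) k = sum_list xs0" "length xs0 = k" "set xs0 \<subseteq> V1 MP A1 A2 u1 u2"
            using W1[of "(a0, a2)"] A a2(1) by (auto simp: lsums_def)
          obtain xs1 where xs1: "rep_payoff A1 A2 u1 \<mu>1 \<mu>2 (h @ [(a', a2)]) k = sum_list xs1" "length xs1 = k" "set xs1 \<subseteq> V1 MP A1 A2 u1 u2"
            using W1[of "(a', a2)"] A a2(1) by (auto simp: lsums_def)
          have e: "u1 a0 a2 - u1 a' a2 = sum_list xs1 - sum_list xs0"
            using veq[OF a0] veq[of a'] a' xs0(1) xs1(1) by (simp add: val_def)
          define ds where "ds = map (\<lambda>(x, y). x - y) (zip xs1 xs0)"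
          have "set ds \<subseteq> ?D"
          proof
            fix d assume "d \<in> set ds"
            then obtain x y where xy: "(x, y) \<in> set (zip xs1 xs0)" "d = x - y" by (auto simp: ds_def)
            have "x \<in> V1 MP A1 A2 u1 u2" "y \<in> V1 MP A1 A2 u1 u2"
              using set_zip_leftD[OF xy(1)] set_zip_rightD[OF xy(1)] xs0(3) xs1(3) by auto
            then obtain s1 s2 t1 t2 where "(s1, s2) \<in> NashSet MP A1 A2 u1 u2" "x = EU A1 A2 u1 s1 s2"
              "(t1, t2) \<in> NashSet MP A1 A2 u1 u2" "y = EU A1 A2 u1 t1 t2"
              by (auto simp: V1_def)
            then show "d \<in> ?D" using xy(2) by blast
          qed
          moreover have "u1 a0 a2 - u1 a' a2 = sum_list ds"
            using e sum_list_zip_diff[of xs1 xs0] xs0(2) xs1(2) by (simp add: ds_def)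
          ultimately show ?thesis by blast
        qed
        then show ?thesis using a0 by blast
      qed
      show ?thesis using 2 mx a1'(1) a2(1) lt br dc by blast
    next
      case 3
      obtain v1 where v1: "V1 MP A1 A2 u1 u2 = {v1}" using card1_E[OF 3(1)] by blast
      have c1': "\<And>x. x \<in> A1 \<times> A2 \<Longrightarrow> rep_payoff A1 A2 u1 \<mu>1 \<mu>2 (h @ [x]) k = real k * v1"
        using W1 lsums_single[of _ v1] v1 by blast
      have br: "\<forall>\<tau>. mixed A1 \<tau> \<longrightarrow> EU A1 A2 u1 \<tau> (pt a2) \<le> EU A1 A2 u1 \<sigma> (pt a2)"
        using BR1[OF fin1 fin2 spe h c1'] by (simp add: \<sigma>_def a2(2) avail1_MP)
      have "\<exists>\<tau>. avail2 MP A2 \<tau> \<and> EU A1 A2 u2 \<sigma> (pt a2) < EU A1 A2 u2 \<sigma> \<tau>"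
      proof (rule ccontr)
        assume "\<not> ?thesis"
        then have "nash MP A1 A2 u1 u2 \<sigma> (pt a2)"
          using av1 av2 br a2 unfolding nash_def \<sigma>_def by (auto simp: not_less avail1_MP)
        then show False using nn' by simp
      qed
      then obtain \<tau> where t: "avail2 MP A2 \<tau>" "EU A1 A2 u2 \<sigma> (pt a2) < EU A1 A2 u2 \<sigma> \<tau>" by blast
      obtain b' where b': "b' \<in> A2" "\<tau> = pt b'" using avail2_pure[OF t(1) r] by blast
      show ?thesis using 3 mx a2(1) b' t(2) br by blast
    next
      case 4
      obtain v1 where v1: "V1 MP A1 A2 u1 u2 = {v1}" using card1_E[OF 4(1)] by blast
      obtain v2 where v2: "V2 MP A1 A2 u1 u2 = {v2}" using card1_E[OF 4(2)] by blast
      have c1': "\<And>x. x \<in> A1 \<times> A2 \<Longrightarrow> rep_payoff A1 A2 u1 \<mu>1 \<mu>2 (h @ [x]) k = real k * v1"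
        using W1 lsums_single[of _ v1] v1 by blast
      have c2': "\<And>x. x \<in> A1 \<times> A2 \<Longrightarrow> rep_payoff A1 A2 u2 \<mu>1 \<mu>2 (h @ [x]) k = real k * v2"
        using W2 v2 by simp
      have "nash MP A1 A2 u1 u2 (\<mu>1 h) (\<mu>2 h)"
        by (rule nash_from_BR[OF av1 av2 BR1[OF fin1 fin2 spe h c1'] BR2[OF fin1 fin2 spe h c2']])
      then show ?thesis using nn by simp
    qed
  qed
qed

theorem mainTheorem11:
  fixes A1 :: "'a set" and A2 :: "'b set" and u1 u2 :: "'a \<Rightarrow> 'b \<Rightarrow> real"
  assumes "finite A1" "A1 \<noteq> {}" "finite A2" "A2 \<noteq> {}"
  shows "(\<not> G_LS PP A1 A2 u1 u2 \<and> G_LS MP A1 A2 u1 u2) \<longleftrightarrow>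
    ((V1 PP A1 A2 u1 u2 = {} \<and> V2 PP A1 A2 u1 u2 = {} \<and> C_mp A1 A2 u1 u2)
     \<or> (card (V1 PP A1 A2 u1 u2) = 1 \<and> card (V2 PP A1 A2 u1 u2) = 1 \<and> C_mp A1 A2 u1 u2)
     \<or> (more_than_one (V1 PP A1 A2 u1 u2) \<and> card (V2 PP A1 A2 u1 u2) = 1 \<and>
        \<not> (\<exists>a1 a1' a2. a1 \<in> A1 \<and> a1' \<in> A1 \<and> a2 \<in> A2 \<and> u1 a1 a2 < u1 a1' a2 \<and>
              (\<forall>b\<in>A2. u2 a1 b \<le> u2 a1 a2)) \<and>
        C_mp A1 A2 u1 u2))"
proof -
  have fin1: "finite A1" and fin2: "finite A2" using assms by simp_all
  obtain a0 where a0: "a0 \<in> A1" using assms(2) by blast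
  obtain b0 where b0: "b0 \<in> A2" using assms(4) by blast
  have rP: "PP \<noteq> MM" by simp
  show ?thesis (is "?L \<longleftrightarrow> ?R")
  proof
    assume L: "\<not> G_LS PP A1 A2 u1 u2 \<and> G_LS MP A1 A2 u1 u2"
    have Cm: "C_mp A1 A2 u1 u2" by (rule GMP[OF fin1 fin2 a0 b0]) (use L in simp)
    show "(V1 PP A1 A2 u1 u2 = {} \<and> V2 PP A1 A2 u1 u2 = {} \<and> C_mp A1 A2 u1 u2)
     \<or> (card (V1 PP A1 A2 u1 u2) = 1 \<and> card (V2 PP A1 A2 u1 u2) = 1 \<and> C_mp A1 A2 u1 u2)
     \<or> (more_than_one (V1 PP A1 A2 u1 u2) \<and> card (V2 PP A1 A2 u1 u2) = 1 \<and>
        \<not> (\<exists>a1 a1' a2. a1 \<in> A1 \<and> a1' \<in> A1 \<and> a2 \<in> A2 \<and> u1 a1 a2 < u1 a1' a2 \<and>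
              (\<forall>b\<in>A2. u2 a1 b \<le> u2 a1 a2)) \<and>
        C_mp A1 A2 u1 u2)"
    proof (cases "\<forall>p q. \<not> nash PP A1 A2 u1 u2 p q")
      case True
      then have "V1 PP A1 A2 u1 u2 = {}" "V2 PP A1 A2 u1 u2 = {}" unfolding V1_empty V2_empty by blast+
      then show ?thesis using Cm by blast
    next
      case False
      then have ne: "V1 PP A1 A2 u1 u2 \<noteq> {}" "V2 PP A1 A2 u1 u2 \<noteq> {}" unfolding V1_empty V2_empty by blast+
      consider "card (V1 PP A1 A2 u1 u2) = 1" "card (V2 PP A1 A2 u1 u2) = 1"
        | "more_than_one (V1 PP A1 A2 u1 u2)" "card (V2 PP A1 A2 u1 u2) = 1"
        | "card (V1 PP A1 A2 u1 u2) = 1" "more_than_one (V2 PP A1 A2 u1 u2)"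
        | "more_than_one (V1 PP A1 A2 u1 u2)" "more_than_one (V2 PP A1 A2 u1 u2)"
        using tri[OF ne(1)] tri[OF ne(2)] by blast
      then show ?thesis
      proof cases
        case 1 then show ?thesis using Cm by blast
      next
        case 2
        have nt: "\<not> (\<exists>a1 a1' a2. a1 \<in> A1 \<and> a1' \<in> A1 \<and> a2 \<in> A2 \<and> u1 a1 a2 < u1 a1' a2 \<and>
              (\<forall>b\<in>A2. u2 a1 b \<le> u2 a1 a2))"
        proof
          assume "\<exists>a1 a1' a2. a1 \<in> A1 \<and> a1' \<in> A1 \<and> a2 \<in> A2 \<and> u1 a1 a2 < u1 a1' a2 \<and> (\<forall>b\<in>A2. u2 a1 b \<le> u2 a1 a2)"
          then obtain a1 a1' a2 where t: "a1 \<in> A1" "a1' \<in> A1" "a2 \<in> A2" "u1 a1 a2 < u1 a1' a2"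
            "\<forall>b\<in>A2. u2 a1 b \<le> u2 a1 a2" by blast
          have sp: "a1 \<in> support (pt a1)" by (simp add: support_pt)
          have "G_LS PP A1 A2 u1 u2"
          proof (rule CII[OF fin1 fin2 rP 2(1,2) avail1_pt[OF fin1 t(1) rP] t(2,3) _ _ sp])
            show "EU A1 A2 u1 (pt a1) (pt a2) < u1 a1' a2" using t by (simp add: EU_pt12[OF fin1 fin2 t(1,3)])
            show "EU A1 A2 u2 (pt a1) (pt b) \<le> EU A1 A2 u2 (pt a1) (pt a2)" if "b \<in> A2" for b
              using t that by (simp add: EU_pt12[OF fin1 fin2 t(1)])
          qed (simp add: support_pt)
          then show False using L by simp
        qed
        then show ?thesis using 2 Cm by blast
      next
        case 3
        show ?thesis
        proof (cases "\<exists>a1 a2 a2'. a1 \<in> A1 \<and> a2 \<in> A2 \<and> a2' \<in> A2 \<and> u2 a1 a2 < u2 a1 a2' \<and> (\<forall>a\<in>A1. u1 a a2 \<le> u1 a1 a2)")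
          case True
          then obtain a1 a2 a2' where t: "a1 \<in> A1" "a2 \<in> A2" "a2' \<in> A2" "u2 a1 a2 < u2 a1 a2'"
            "\<forall>a\<in>A1. u1 a a2 \<le> u1 a1 a2" by blast
          have "G_LS PP A1 A2 u1 u2"
          proof (rule CIII[OF fin1 fin2 rP 3(1,2) avail1_pt[OF fin1 t(1) rP] t(2,3)])
            show "EU A1 A2 u2 (pt a1) (pt a2) < EU A1 A2 u2 (pt a1) (pt a2')"
              using t by (simp add: EU_pt12[OF fin1 fin2 t(1)])
            fix \<tau> assume "avail1 PP A1 \<tau>"
            then obtain a where "a \<in> A1" "\<tau> = pt a" using avail1_PP by blast
            then show "EU A1 A2 u1 \<tau> (pt a2) \<le> EU A1 A2 u1 (pt a1) (pt a2)"
              using t by (simp add: EU_pt12[OF fin1 fin2 _ t(2)])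
          qed
          then show ?thesis using L by simp
        next
          case False
          have nt: "\<forall>b\<in>A2. u2 a1 b \<le> u2 a1 a2"
            if na: "a1 \<in> A1" "a2 \<in> A2" "\<forall>a\<in>A1. u1 a a2 \<le> u1 a1 a2" for a1 a2
          proof
            fix b assume b: "b \<in> A2"
            show "u2 a1 b \<le> u2 a1 a2"
            proof (rule ccontr)
              assume "\<not> u2 a1 b \<le> u2 a1 a2"
              then have "u2 a1 a2 < u2 a1 b" by simp
              then have "\<exists>a1 a2 a2'. a1 \<in> A1 \<and> a2 \<in> A2 \<and> a2' \<in> A2 \<and> u2 a1 a2 < u2 a1 a2' \<and> (\<forall>a\<in>A1. u1 a a2 \<le> u1 a1 a2)"
                using na b by (intro exI[of _ a1] exI[of _ a2] exI[of _ b]) simp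
              then show False using False by simp
            qed
          qed
          obtain v1 where v1: "V1 PP A1 A2 u1 u2 = {v1}" using card1_E[OF 3(1)] by blast
          have "V1 MP A1 A2 u1 u2 \<subseteq> {v1}" by (rule V1MP_sub[OF fin1 fin2 _ nt]) (simp_all add: v1)
          then have "\<not> G_LS MP A1 A2 u1 u2" by (rule N4[OF fin1 fin2 _ nt]) simp_all
          then show ?thesis using L by simp
        qed
      next
        case 4
        show ?thesis
        proof (cases "\<forall>a1\<in>A1. \<forall>a2\<in>A2. nash PP A1 A2 u1 u2 (pt a1) (pt a2)")
          case True
          then have "\<not> G_LS MP A1 A2 u1 u2" using N6[OF fin1 fin2] by blast
          then show ?thesis using L by simp
        next
          case False
          then obtain a1 a2 where "a1 \<in> A1" "a2 \<in> A2" "\<not> nash PP A1 A2 u1 u2 (pt a1) (pt a2)" by blast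
          then have "G_LS PP A1 A2 u1 u2" using CI[OF fin1 fin2 rP 4(1,2)] by blast
          then show ?thesis using L by simp
        qed
      qed
    qed
  next
    assume R: "(V1 PP A1 A2 u1 u2 = {} \<and> V2 PP A1 A2 u1 u2 = {} \<and> C_mp A1 A2 u1 u2)
     \<or> (card (V1 PP A1 A2 u1 u2) = 1 \<and> card (V2 PP A1 A2 u1 u2) = 1 \<and> C_mp A1 A2 u1 u2)
     \<or> (more_than_one (V1 PP A1 A2 u1 u2) \<and> card (V2 PP A1 A2 u1 u2) = 1 \<and>
        \<not> (\<exists>a1 a1' a2. a1 \<in> A1 \<and> a1' \<in> A1 \<and> a2 \<in> A2 \<and> u1 a1 a2 < u1 a1' a2 \<and>
              (\<forall>b\<in>A2. u2 a1 b \<le> u2 a1 a2)) \<and>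
        C_mp A1 A2 u1 u2)"
    then have Cm: "C_mp A1 A2 u1 u2" by blast
    have gm: "G_LS MP A1 A2 u1 u2" by (rule CMP_suff[OF fin1 fin2 assms(2) Cm])
    have "\<not> G_LS PP A1 A2 u1 u2"
      using R
    proof (elim disjE conjE)
      assume "V1 PP A1 A2 u1 u2 = {}"
      then have "\<forall>p q. \<not> nash PP A1 A2 u1 u2 p q" unfolding V1_empty .
      then show ?thesis by (rule N_empty[OF fin1 fin2 a0 b0])
    next
      assume "card (V1 PP A1 A2 u1 u2) = 1" "card (V2 PP A1 A2 u1 u2) = 1"
      then show ?thesis using N_both1[OF fin1 fin2 rP] by blast
    next
      assume "card (V2 PP A1 A2 u1 u2) = 1" "\<not> (\<exists>a1 a1' a2. a1 \<in> A1 \<and> a1' \<in> A1 \<and> a2 \<in> A2 \<and> u1 a1 a2 < u1 a1' a2 \<and>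
              (\<forall>b\<in>A2. u2 a1 b \<le> u2 a1 a2))"
      then show ?thesis using N2[OF fin1 fin2] by blast
    qed
    then show "\<not> G_LS PP A1 A2 u1 u2 \<and> G_LS MP A1 A2 u1 u2" using gm by blast
  qed
qed

end
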